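(* Let $G=\theta_{d_1,\dots,d_\ell}$ be a generalized theta graph with $\ell\ge 1$ paths and $d_i\ge 1$ for all $i$, with poles $N,S$. Suppose there is one source agent and $k\ge \ell$ ignorant agents placed on pairwise distinct nodes of $G$ (in the Broadcast model below). Then the agents have a strategy such that, for every initial placement and every behaviour of the adversary, after finitely many rounds the following configuration is reached: there is a path $P$ of $G$ such that two agents holding the message $\mathcal M$ are located on nodes of $P$ (its internal vertices or its poles), and there is an injective assignment of the remaining $\ell-1$ paths to distinct ignorant agents such that each such ignorant agent is located on a node of its assigned path.
   Context: Generalized theta graph: $\theta_{d_1,\dots,d_\ell}$ consists of two distinct fixed nodes $N,S$ (the poles) joined by $\ell$ internally vertex-disjoint paths, the $i$-th of which has exactly $d_i\ge 1$ internal nodes; the nodes of the $i$-th path are its internal nodes together with $N$ and $S$. Broadcast model: a connected base graph $G=(V,E)$ with $n$ nodes. There is one source agent holding a message $\mathcal M$ and $k\ge1$ ignorant agents (agents not holding $\mathcal M$); initially all agents occupy pairwise distinct nodes, the initial placement being chosen by the adversary. Time proceeds in synchronous rounds; in each round: (1) the adversary removes a (possibly empty) set $E'\subseteq E$ of edges such that $(V,E\setminus E')$ is connected; (2) each agent (agents have unique IDs, local memory, and see the entire current graph, the positions of all agents and which agents hold $\mathcal M$) chooses either to stay or to traverse an edge of $E\setminus E'$ incident to its current node; (3) agents move. Whenever an ignorant agent is at the same node as an agent holding $\mathcal M$, it receives $\mathcal M$ and becomes a source agent. The adversary is adaptive and knows the agents' strategy. Broadcast is solvable on $G$ with $k$ ignorant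 agents if the agents have a strategy such that, for every initial placement and every adversary behaviour, after finitely many rounds all agents hold $\mathcal M$; otherwise the adversary is said to have a winning strategy. *)

theory Defs
  imports Main
begin

text \<open>Nodes of a generalized theta graph: the poles N, S and the internal node
  IV i j = j-th internal node (1 \<le> j \<le> d i) of the i-th path (i < l).\<close>
datatype tvert = NP | SP | IV nat nat

definition theta_V :: "nat \<Rightarrow> (nat \<Rightarrow> nat) \<Rightarrow> tvert set" where
  "theta_V l d = {NP, SP} \<union> {IV i j | i j. i < l \<and> 1 \<le> j \<and> j \<le> d i}"

definition path_nodes :: "(nat \<Rightarrow> nat) \<Rightarrow> nat \<Rightarrow> tvert set" where
  "path_nodes d i = {NP, SP} \<union> {IV i j | j. 1 \<le> j \<and> j \<le> d i}"

definition theta_E :: "nat \<Rightarrow> (nat \<Rightarrow> nat) \<Rightarrow> tvert set set" where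
  "theta_E l d =
     {{NP, IV i 1} | i. i < l}
   \<union> {{IV i j, IV i (Suc j)} | i j. i < l \<and> 1 \<le> j \<and> j < d i}
   \<union> {{IV i (d i), SP} | i. i < l}"

definition connected_on :: "'v set \<Rightarrow> 'v set set \<Rightarrow> bool" where
  "connected_on V F \<longleftrightarrow> (\<forall>u\<in>V. \<forall>v\<in>V. (u, v) \<in> {(x, y). {x, y} \<in> F}\<^sup>*)"

text \<open>A (deterministic, full-information) strategy of the agents: given the history of
  positions at times 0..t and the available edge sets of rounds 1..t+1 (including the
  current one), it returns the new position of every agent.\<close>
type_synonym strategy = "(nat \<Rightarrow> tvert) list \<Rightarrow> tvert set set list \<Rightarrow> nat \<Rightarrow> tvert"

text \<open>A t = set of edges available (not removed) in round t+1.\<close>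
fun hist :: "strategy \<Rightarrow> (nat \<Rightarrow> tvert) \<Rightarrow> (nat \<Rightarrow> tvert set set) \<Rightarrow> nat \<Rightarrow> (nat \<Rightarrow> tvert) list" where
  "hist \<sigma> p0 A 0 = [p0]"
| "hist \<sigma> p0 A (Suc t) = hist \<sigma> p0 A t @ [\<sigma> (hist \<sigma> p0 A t) (map A [0..<Suc t])]"

definition pos :: "strategy \<Rightarrow> (nat \<Rightarrow> tvert) \<Rightarrow> (nat \<Rightarrow> tvert set set) \<Rightarrow> nat \<Rightarrow> nat \<Rightarrow> tvert" where
  "pos \<sigma> p0 A t = last (hist \<sigma> p0 A t)"

text \<open>Agents are 0..k; agent 0 is the source. Set of agents holding the message at time t.\<close>
fun informed :: "strategy \<Rightarrow> (nat \<Rightarrow> tvert) \<Rightarrow> (nat \<Rightarrow> tvert set set) \<Rightarrow> nat \<Rightarrow> nat \<Rightarrow> nat set" where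
  "informed \<sigma> p0 A k 0 = {0}"
| "informed \<sigma> p0 A k (Suc t) = informed \<sigma> p0 A k t \<union>
     {a. a \<le> k \<and> (\<exists>b\<in>informed \<sigma> p0 A k t. pos \<sigma> p0 A (Suc t) a = pos \<sigma> p0 A (Suc t) b)}"

definition valid_init :: "nat \<Rightarrow> (nat \<Rightarrow> nat) \<Rightarrow> nat \<Rightarrow> (nat \<Rightarrow> tvert) \<Rightarrow> bool" where
  "valid_init l d k p0 \<longleftrightarrow> inj_on p0 {0..k} \<and> (\<forall>a\<le>k. p0 a \<in> theta_V l d)"

definition valid_adversary :: "nat \<Rightarrow> (nat \<Rightarrow> nat) \<Rightarrow> (nat \<Rightarrow> tvert set set) \<Rightarrow> bool" where
  "valid_adversary l d A \<longleftrightarrow> (\<forall>t. A t \<subseteq> theta_E l d \<and> connected_on (theta_V l d) (A t))"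

definition legal_run :: "nat \<Rightarrow> strategy \<Rightarrow> (nat \<Rightarrow> tvert) \<Rightarrow> (nat \<Rightarrow> tvert set set) \<Rightarrow> bool" where
  "legal_run k \<sigma> p0 A \<longleftrightarrow> (\<forall>t. \<forall>a\<le>k.
      pos \<sigma> p0 A (Suc t) a = pos \<sigma> p0 A t a \<or>
      {pos \<sigma> p0 A t a, pos \<sigma> p0 A (Suc t) a} \<in> A t)"

definition target_config :: "nat \<Rightarrow> (nat \<Rightarrow> nat) \<Rightarrow> nat \<Rightarrow> strategy \<Rightarrow> (nat \<Rightarrow> tvert)
    \<Rightarrow> (nat \<Rightarrow> tvert set set) \<Rightarrow> nat \<Rightarrow> bool" where
  "target_config l d k \<sigma> p0 A t \<longleftrightarrow>
     (\<exists>i<l. \<exists>a b. a \<noteq> b \<and> a \<in> informed \<sigma> p0 A k t \<and> b \<in> informed \<sigma> p0 A k t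
        \<and> pos \<sigma> p0 A t a \<in> path_nodes d i \<and> pos \<sigma> p0 A t b \<in> path_nodes d i
        \<and> (\<exists>f. inj_on f ({..<l} - {i})
              \<and> (\<forall>j\<in>{..<l} - {i}. f j \<le> k \<and> f j \<notin> informed \<sigma> p0 A k t
                                  \<and> pos \<sigma> p0 A t (f j) \<in> path_nodes d j)))"

end

theory Submission
  imports Defs
begin


definition nd :: "(nat \<Rightarrow> nat) \<Rightarrow> nat \<Rightarrow> nat \<Rightarrow> tvert" where
  "nd d j m = (if m = 0 then NP else if m = Suc (d j) then SP else IV j m)"

definition ed :: "(nat \<Rightarrow> nat) \<Rightarrow> nat \<Rightarrow> nat \<Rightarrow> tvert set" where
  "ed d j m = {nd d j m, nd d j (Suc m)}"

lemma nd_0[simp]: "nd d j 0 = NP" by (simp add: nd_def)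
lemma nd_S[simp]: "nd d j (Suc (d j)) = SP" by (simp add: nd_def)
lemma nd_in[simp]: "1 \<le> m \<Longrightarrow> m \<le> d j \<Longrightarrow> nd d j m = IV j m" by (simp add: nd_def)

lemma nd_V: "j < l \<Longrightarrow> m \<le> Suc (d j) \<Longrightarrow> nd d j m \<in> theta_V l d"
  by (auto simp: nd_def theta_V_def)

lemma nd_NP_iff: "m \<le> Suc (d j) \<Longrightarrow> nd d j m = NP \<longleftrightarrow> m = 0"
  by (auto simp: nd_def)
lemma nd_SP_iff: "m \<le> Suc (d j) \<Longrightarrow> nd d j m = SP \<longleftrightarrow> m = Suc (d j)"
  by (auto simp: nd_def)
lemma nd_IV_iff: "m \<le> Suc (d j) \<Longrightarrow> nd d j m = IV i x \<longleftrightarrow> (i = j \<and> x = m \<and> 1 \<le> m \<and> m \<le> d j)"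
  by (auto simp: nd_def)

lemma ed_E: assumes "j < l" "m \<le> d j" "d j \<ge> 1" shows "ed d j m \<in> theta_E l d"
proof -
  consider "m = 0" | "m = d j" "m \<noteq> 0" | "0 < m" "m < d j" using assms by linarith
  then show ?thesis
  proof cases
    case 1
    then have "ed d j m = {NP, IV j 1}" using assms by (simp add: ed_def nd_def)
    then show ?thesis unfolding theta_E_def using assms(1) by blast
  next
    case 2
    then have "ed d j m = {IV j (d j), SP}" using assms by (simp add: ed_def nd_def)
    then show ?thesis unfolding theta_E_def using assms(1) by blast
  next
    case 3
    then have "ed d j m = {IV j m, IV j (Suc m)}" using assms by (simp add: ed_def nd_def)
    moreover have "1 \<le> m" using 3 by simp
    ultimately show ?thesis unfolding theta_E_def using assms(1) 3 by blast
  qed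
qed

lemma theta_E_ed:
  assumes "e \<in> theta_E l d" "\<forall>i<l. d i \<ge> 1"
  shows "\<exists>j m. j < l \<and> m \<le> d j \<and> e = ed d j m"
proof -
  from assms(1) consider (a) i where "e = {NP, IV i 1}" "i < l"
    | (b) i m where "e = {IV i m, IV i (Suc m)}" "i < l" "1 \<le> m" "m < d i"
    | (c) i where "e = {IV i (d i), SP}" "i < l"
    unfolding theta_E_def by blast
  then show ?thesis
  proof cases
    case a
    then have "d i \<ge> 1" using assms(2) by blast
    then have "e = ed d i 0" using a by (simp add: ed_def nd_def)
    then show ?thesis using a by blast
  next
    case b
    then have "e = ed d i m" by (simp add: ed_def nd_def)
    then show ?thesis using b by (intro exI[of _ i] exI[of _ m]) simp
  next
    case c
    then have "d i \<ge> 1" using assms(2) by blast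
    then have "e = ed d i (d i)" using c by (simp add: ed_def nd_def)
    then show ?thesis using c by blast
  qed
qed


definition validF :: "nat \<Rightarrow> (nat \<Rightarrow> nat) \<Rightarrow> tvert set set \<Rightarrow> bool" where
  "validF l d F \<longleftrightarrow> F \<subseteq> theta_E l d \<and> connected_on (theta_V l d) F"

lemma closed_rtrancl:
  assumes "(x, y) \<in> R\<^sup>*" "x \<in> X" "\<And>u v. (u, v) \<in> R \<Longrightarrow> u \<in> X \<Longrightarrow> v \<in> X"
  shows "y \<in> X"
  using assms(1,2) by (induction rule: rtrancl_induct) (auto intro: assms(3))

lemma ed_doubleton: "{x, y} = ed d j m \<longleftrightarrow> (x = nd d j m \<and> y = nd d j (Suc m)) \<or> (x = nd d j (Suc m) \<and> y = nd d j m)"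
  unfolding ed_def by (rule doubleton_eq_iff)

lemma nbr_IV:
  assumes "{IV j m, y} \<in> theta_E l d" "\<forall>i<l. d i \<ge> 1"
  shows "1 \<le> m \<and> m \<le> d j \<and> j < l \<and> ((y = nd d j (m - 1) \<and> {IV j m, y} = ed d j (m - 1)) \<or> (y = nd d j (Suc m) \<and> {IV j m, y} = ed d j m))"
proof -
  obtain i m' where im: "i < l" "m' \<le> d i" "{IV j m, y} = ed d i m'" using theta_E_ed[OF assms] by blast
  from im(3) have "(IV j m = nd d i m' \<and> y = nd d i (Suc m')) \<or> (IV j m = nd d i (Suc m') \<and> y = nd d i m')"
    by (simp add: ed_doubleton)
  then show ?thesis
  proof
    assume h: "IV j m = nd d i m' \<and> y = nd d i (Suc m')"
    then have "i = j" "m' = m" "1 \<le> m'" "m' \<le> d i" using nd_IV_iff[of m' d i j m] im(2) by auto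
    then show ?thesis using h im by auto
  next
    assume h: "IV j m = nd d i (Suc m') \<and> y = nd d i m'"
    then have "i = j" "Suc m' = m" "Suc m' \<le> d i" using nd_IV_iff[of "Suc m'" d i j m] im(2) by auto
    then show ?thesis using h im by (auto simp: ed_def insert_commute)
  qed
qed

lemma nbr_NP:
  assumes "{NP, y} \<in> theta_E l d" "\<forall>i<l. d i \<ge> 1"
  shows "\<exists>i<l. y = nd d i 1 \<and> {NP, y} = ed d i 0"
proof -
  obtain i m' where im: "i < l" "m' \<le> d i" "{NP, y} = ed d i m'" using theta_E_ed[OF assms] by blast
  from im(3) have "(NP = nd d i m' \<and> y = nd d i (Suc m')) \<or> (NP = nd d i (Suc m') \<and> y = nd d i m')"
    by (simp add: ed_doubleton)
  then show ?thesis
  proof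
    assume h: "NP = nd d i m' \<and> y = nd d i (Suc m')"
    then have "m' = 0" using nd_NP_iff[of m' d i] im(2) by auto
    then show ?thesis using h im by auto
  next
    assume h: "NP = nd d i (Suc m') \<and> y = nd d i m'"
    then show ?thesis using nd_NP_iff[of "Suc m'" d i] im(2) by auto
  qed
qed

lemma nbr_SP:
  assumes "{SP, y} \<in> theta_E l d" "\<forall>i<l. d i \<ge> 1"
  shows "\<exists>i<l. y = nd d i (d i) \<and> {SP, y} = ed d i (d i)"
proof -
  obtain i m' where im: "i < l" "m' \<le> d i" "{SP, y} = ed d i m'" using theta_E_ed[OF assms] by blast
  from im(3) have "(SP = nd d i m' \<and> y = nd d i (Suc m')) \<or> (SP = nd d i (Suc m') \<and> y = nd d i m')"
    by (simp add: ed_doubleton)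
  then show ?thesis
  proof
    assume h: "SP = nd d i m' \<and> y = nd d i (Suc m')"
    then show ?thesis using nd_SP_iff[of m' d i] im(2) by auto
  next
    assume h: "SP = nd d i (Suc m') \<and> y = nd d i m'"
    then have "m' = d i" using nd_SP_iff[of "Suc m'" d i] im(2) by auto
    then show ?thesis using h im by (auto simp: ed_def insert_commute)
  qed
qed

lemma one_cut_aux:
  assumes F: "validF l d F" and dpos: "\<forall>i<l. d i \<ge> 1" and j: "j < l"
    and m: "m1 < m2" "m2 \<le> d j" and c1: "ed d j m1 \<notin> F" and c2: "ed d j m2 \<notin> F"
  shows False
proof -
  let ?R = "{(x, y). {x, y} \<in> F}"
  let ?X = "{IV j m | m. m1 < m \<and> m \<le> m2}"
  have cl: "v \<in> ?X" if "(u, v) \<in> ?R" "u \<in> ?X" for u v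
  proof -
    from that obtain m where um: "u = IV j m" "m1 < m" "m \<le> m2" and uv: "{u, v} \<in> F" by auto
    have "{IV j m, v} \<in> theta_E l d" using uv um F unfolding validF_def by auto
    from nbr_IV[OF this dpos] have
      "(v = nd d j (m - 1) \<and> {IV j m, v} = ed d j (m - 1)) \<or> (v = nd d j (Suc m) \<and> {IV j m, v} = ed d j m)"
      by blast
    then show ?thesis
    proof
      assume h: "v = nd d j (m - 1) \<and> {IV j m, v} = ed d j (m - 1)"
      have "m - 1 \<noteq> m1" using h uv um c1 by auto
      then have "m1 < m - 1" "1 \<le> m - 1" "m - 1 \<le> d j" using um m by auto
      then show ?thesis using h um by auto
    next
      assume h: "v = nd d j (Suc m) \<and> {IV j m, v} = ed d j m"
      have "m \<noteq> m2" using h uv um c2 by auto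
      then have "Suc m \<le> m2" using um by auto
      then show ?thesis using h um m by auto
    qed
  qed
  have x0: "IV j (Suc m1) \<in> theta_V l d" "NP \<in> theta_V l d" using m j unfolding theta_V_def by auto
  then have "(IV j (Suc m1), NP) \<in> ?R\<^sup>*" using F unfolding validF_def connected_on_def by blast
  moreover have "IV j (Suc m1) \<in> ?X" using m by auto
  ultimately have "NP \<in> ?X" using closed_rtrancl[of _ _ ?R ?X] cl by blast
  then show False by auto
qed

lemma one_cut:
  assumes "validF l d F" "\<forall>i<l. d i \<ge> 1" "j < l" "m1 \<le> d j" "m2 \<le> d j"
    "ed d j m1 \<notin> F" "ed d j m2 \<notin> F"
  shows "m1 = m2"
proof (rule ccontr)
  assume "m1 \<noteq> m2"
  then consider "m1 < m2" | "m2 < m1" by linarith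
  then show False
  proof cases
    case 1 then show False using one_cut_aux[OF assms(1,2,3) 1] assms by blast
  next
    case 2 then show False using one_cut_aux[OF assms(1,2,3) 2] assms by blast
  qed
qed

lemma intact:
  assumes F: "validF l d F" and dpos: "\<forall>i<l. d i \<ge> 1"
  shows "\<exists>r<l. \<forall>m\<le>d r. ed d r m \<in> F"
proof (rule ccontr)
  assume "\<not> ?thesis"
  then have "\<forall>r<l. \<exists>m\<le>d r. ed d r m \<notin> F" by blast
  then obtain mc where mc: "\<And>r. r < l \<Longrightarrow> mc r \<le> d r \<and> ed d r (mc r) \<notin> F" by metis
  let ?R = "{(x, y). {x, y} \<in> F}"
  let ?X = "insert NP {IV r m | r m. r < l \<and> 1 \<le> m \<and> m \<le> mc r}"
  have cl: "v \<in> ?X" if uvR: "(u, v) \<in> ?R" and uX: "u \<in> ?X" for u v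
  proof -
    from uvR have uv: "{u, v} \<in> F" by auto
    then have uvE: "{u, v} \<in> theta_E l d" using F unfolding validF_def by auto
    show ?thesis
    proof (cases "u = NP")
      case True
      then obtain i where i: "i < l" "v = nd d i 1" "{NP, v} = ed d i 0" using nbr_NP[OF _ dpos] uvE by blast
      have "mc i \<noteq> 0"
      proof
        assume "mc i = 0"
        then have "ed d i 0 \<notin> F" using mc[OF i(1)] by simp
        then show False using i uv True by simp
      qed
      then show ?thesis using i dpos mc[OF i(1)] by auto
    next
      case False
      then obtain r m where um: "u = IV r m" "r < l" "1 \<le> m" "m \<le> mc r" using uX by auto
      from nbr_IV[OF _ dpos, of r m v] uvE um have
        "(v = nd d r (m - 1) \<and> {IV r m, v} = ed d r (m - 1)) \<or> (v = nd d r (Suc m) \<and> {IV r m, v} = ed d r m)"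
        by blast
      then show ?thesis
      proof
        assume h: "v = nd d r (m - 1) \<and> {IV r m, v} = ed d r (m - 1)"
        show ?thesis
        proof (cases "m = 1")
          case True then show ?thesis using h by simp
        next
          case False
          then have "v = IV r (m - 1)" using h um mc[OF um(2)] by auto
          then show ?thesis using um False by auto
        qed
      next
        assume h: "v = nd d r (Suc m) \<and> {IV r m, v} = ed d r m"
        have "m \<noteq> mc r" using h uv um mc[OF um(2)] by auto
        then have "Suc m \<le> mc r" using um by auto
        then show ?thesis using h um mc[OF um(2)] by auto
      qed
    qed
  qed
  have "NP \<in> theta_V l d" "SP \<in> theta_V l d" unfolding theta_V_def by auto
  then have "(NP, SP) \<in> ?R\<^sup>*" using F unfolding validF_def connected_on_def by blast
  then have "SP \<in> ?X" using closed_rtrancl[of _ _ ?R ?X] cl by blast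
  then show False by auto
qed

lemma ed_F_E: "validF l d F \<Longrightarrow> e \<in> F \<Longrightarrow> e \<in> theta_E l d"
  unfolding validF_def by auto


type_synonym conf = "nat \<Rightarrow> tvert"

definition wfc :: "nat \<Rightarrow> (nat \<Rightarrow> nat) \<Rightarrow> nat \<Rightarrow> conf \<Rightarrow> bool" where
  "wfc l d k c \<longleftrightarrow> (\<forall>a\<le>k. c a \<in> theta_V l d) \<and> (\<forall>a. 1 \<le> a \<and> a \<le> k \<longrightarrow> c a \<noteq> c 0)"

definition lmove :: "nat \<Rightarrow> tvert set set \<Rightarrow> conf \<Rightarrow> conf \<Rightarrow> bool" where
  "lmove k F c c' \<longleftrightarrow> (\<forall>a\<le>k. c' a = c a \<or> {c a, c' a} \<in> F)"

definition mt :: "nat \<Rightarrow> conf \<Rightarrow> nat set" where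
  "mt k c = {a. 1 \<le> a \<and> a \<le> k \<and> c a = c 0}"

definition tgt :: "nat \<Rightarrow> (nat \<Rightarrow> nat) \<Rightarrow> nat \<Rightarrow> conf \<Rightarrow> nat set \<Rightarrow> bool" where
  "tgt l d k c IS \<longleftrightarrow>
     (\<exists>i<l. \<exists>a b. a \<noteq> b \<and> a \<in> IS \<and> b \<in> IS
        \<and> c a \<in> path_nodes d i \<and> c b \<in> path_nodes d i
        \<and> (\<exists>f. inj_on f ({..<l} - {i})
              \<and> (\<forall>j\<in>{..<l} - {i}. f j \<le> k \<and> f j \<notin> IS
                                  \<and> c (f j) \<in> path_nodes d j)))"

definition good :: "nat \<Rightarrow> (nat \<Rightarrow> nat) \<Rightarrow> nat \<Rightarrow> (conf \<Rightarrow> nat) list \<Rightarrow> tvert set set \<Rightarrow> conf \<Rightarrow> conf \<Rightarrow> bool" where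
  "good l d k fs F c c' \<longleftrightarrow> lmove k F c c'
     \<and> (mt k c' = {} \<longrightarrow> (c', c) \<in> measures fs)
     \<and> (mt k c' \<noteq> {} \<longrightarrow> tgt l d k c' (insert 0 (mt k c')))"

definition strat :: "nat \<Rightarrow> (nat \<Rightarrow> nat) \<Rightarrow> nat \<Rightarrow> (conf \<Rightarrow> nat) list \<Rightarrow> strategy" where
  "strat l d k fs h As = (let c = last h; F = last As in
     if \<exists>c'. good l d k fs F c c' then (SOME c'. good l d k fs F c c') else c)"

lemma theta_E_V:
  assumes "{x, y} \<in> theta_E l d" "\<forall>i<l. d i \<ge> 1"
  shows "y \<in> theta_V l d"
proof -
  obtain j m where "j < l" "m \<le> d j" "{x, y} = ed d j m" using theta_E_ed[OF assms] by blast
  then have "y = nd d j m \<or> y = nd d j (Suc m)" unfolding ed_def by (auto simp: doubleton_eq_iff)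
  then show ?thesis using nd_V \<open>j < l\<close> \<open>m \<le> d j\<close> by (metis Suc_le_mono le_SucI)
qed

lemma pos_Suc: "pos \<sigma> p0 A (Suc t) = \<sigma> (hist \<sigma> p0 A t) (map A [0..<Suc t])"
  by (simp add: pos_def)

lemma last_hist: "last (hist \<sigma> p0 A t) = pos \<sigma> p0 A t"
  by (simp add: pos_def)

lemma pos_0: "pos \<sigma> p0 A 0 = p0" by (simp add: pos_def)

lemma last_mapA: "last (map A [0..<Suc t]) = A t"
  by (simp add: last_map)

lemma strat_step:
  "pos (strat l d k fs) p0 A (Suc t) =
     (if \<exists>c'. good l d k fs (A t) (pos (strat l d k fs) p0 A t) c'
      then (SOME c'. good l d k fs (A t) (pos (strat l d k fs) p0 A t) c')
      else pos (strat l d k fs) p0 A t)"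
  by (simp add: pos_Suc strat_def last_hist last_mapA Let_def del: upt_Suc hist.simps)

lemma target_tgt: "target_config l d k \<sigma> p0 A t \<longleftrightarrow> tgt l d k (pos \<sigma> p0 A t) (informed \<sigma> p0 A k t)"
  unfolding target_config_def tgt_def by simp

lemma inf_set: "{0} \<union> {a. a \<le> k \<and> (\<exists>b\<in>{0::nat}. c a = c b)} = insert 0 (mt k c)"
  unfolding mt_def by auto

lemma reduction:
  assumes EX: "\<And>c F. wfc l d k c \<Longrightarrow> validF l d F \<Longrightarrow> \<exists>c'. good l d k fs F c c'"
    and dpos: "\<forall>i<l. d i \<ge> 1"
  shows "\<forall>p0 A. valid_init l d k p0 \<and> valid_adversary l d A \<longrightarrow>
           legal_run k (strat l d k fs) p0 A \<and> (\<exists>t. target_config l d k (strat l d k fs) p0 A t)"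
proof (intro allI impI conjI)
  fix p0 A assume H: "valid_init l d k p0 \<and> valid_adversary l d A"
  let ?\<sigma> = "strat l d k fs"
  let ?pos = "pos ?\<sigma> p0 A"
  have vF: "validF l d (A t)" for t using H unfolding valid_adversary_def validF_def by blast
  have step_good: "good l d k fs (A t) (?pos t) (?pos (Suc t))" if "\<exists>c'. good l d k fs (A t) (?pos t) c'" for t
    using that strat_step[of l d k fs p0 A t] by (simp add: someI_ex)
  show "legal_run k ?\<sigma> p0 A"
    unfolding legal_run_def
  proof (intro allI impI)
    fix t a assume a: "a \<le> k"
    show "?pos (Suc t) a = ?pos t a \<or> {?pos t a, ?pos (Suc t) a} \<in> A t"
    proof (cases "\<exists>c'. good l d k fs (A t) (?pos t) c'")
      case True
      then show ?thesis using step_good[OF True] a unfolding good_def lmove_def by blast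
    next
      case False
      then show ?thesis using strat_step[of l d k fs p0 A t] by simp
    qed
  qed
  have V_step: "\<forall>a\<le>k. ?pos (Suc t) a \<in> theta_V l d" if "\<forall>a\<le>k. ?pos t a \<in> theta_V l d" for t
  proof (intro allI impI)
    fix a assume a: "a \<le> k"
    show "?pos (Suc t) a \<in> theta_V l d"
    proof (cases "\<exists>c'. good l d k fs (A t) (?pos t) c'")
      case True
      then have "lmove k (A t) (?pos t) (?pos (Suc t))" using step_good unfolding good_def by blast
      then have "?pos (Suc t) a = ?pos t a \<or> {?pos t a, ?pos (Suc t) a} \<in> A t" using a unfolding lmove_def by blast
      then show ?thesis
      proof
        assume "{?pos t a, ?pos (Suc t) a} \<in> A t"
        then have "{?pos t a, ?pos (Suc t) a} \<in> theta_E l d" using vF[of t] unfolding validF_def by blast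
        then show ?thesis using theta_E_V dpos by blast
      qed (use that a in auto)
    next
      case False
      then show ?thesis using strat_step[of l d k fs p0 A t] that a by simp
    qed
  qed
  have inf_Suc: "informed ?\<sigma> p0 A k (Suc t) = insert 0 (mt k (?pos (Suc t)))"
    if "informed ?\<sigma> p0 A k t = {0}" for t
  proof -
    have "informed ?\<sigma> p0 A k (Suc t) = {0} \<union> {a. a \<le> k \<and> (\<exists>b\<in>{0}. ?pos (Suc t) a = ?pos (Suc t) b)}"
      using that by (simp only: informed.simps)
    also have "\<dots> = insert 0 (mt k (?pos (Suc t)))" by (rule inf_set)
    finally show ?thesis .
  qed
  have main: "\<forall>t. ?pos t = c \<longrightarrow> informed ?\<sigma> p0 A k t = {0} \<longrightarrow> wfc l d k c \<longrightarrow>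
               (\<exists>t'. target_config l d k ?\<sigma> p0 A t')" for c
  proof (induction c rule: wf_induct[OF wf_measures[of fs]])
    case (1 c)
    show ?case
    proof (intro allI impI)
      fix t assume pc: "?pos t = c" and inf: "informed ?\<sigma> p0 A k t = {0}" and wc: "wfc l d k c"
      have ex: "\<exists>c'. good l d k fs (A t) (?pos t) c'" using EX[OF _ vF[of t]] wc pc by simp
      have g: "good l d k fs (A t) c (?pos (Suc t))" using step_good[OF ex] pc by simp
      show "\<exists>t'. target_config l d k ?\<sigma> p0 A t'"
      proof (cases "mt k (?pos (Suc t)) = {}")
        case False
        then have "tgt l d k (?pos (Suc t)) (insert 0 (mt k (?pos (Suc t))))" using g unfolding good_def by blast
        then have "target_config l d k ?\<sigma> p0 A (Suc t)" using inf_Suc[OF inf] target_tgt by simp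
        then show ?thesis by blast
      next
        case True
        then have lt: "(?pos (Suc t), c) \<in> measures fs" using g unfolding good_def by blast
        have inf2: "informed ?\<sigma> p0 A k (Suc t) = {0}" using inf_Suc[OF inf] True by simp
        have "\<forall>a\<le>k. ?pos (Suc t) a \<in> theta_V l d" using V_step[of t] wc pc unfolding wfc_def by simp
        moreover have "\<forall>a. 1 \<le> a \<and> a \<le> k \<longrightarrow> ?pos (Suc t) a \<noteq> ?pos (Suc t) 0" using True unfolding mt_def by blast
        ultimately have "wfc l d k (?pos (Suc t))" unfolding wfc_def by blast
        then show ?thesis using 1[rule_format, OF lt, of "Suc t"] inf2 by blast
      qed
    qed
  qed
  have w0: "wfc l d k p0"
    using H unfolding valid_init_def wfc_def inj_on_def
    by (metis atLeastAtMost_iff le0 le_numeral_extra(2) not_one_le_zero)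
  show "\<exists>t. target_config l d k ?\<sigma> p0 A t"
    using main[of p0] w0 pos_0[of ?\<sigma> p0 A] by simp
qed


fun ix :: "tvert \<Rightarrow> nat" where
  "ix (IV i m) = m" | "ix NP = 0" | "ix SP = 0"

fun pth :: "tvert \<Rightarrow> nat" where
  "pth (IV i m) = i" | "pth NP = 0" | "pth SP = 0"

locale TG =
  fixes l :: nat and d :: "nat \<Rightarrow> nat" and k :: nat
  assumes l1: "1 \<le> l" and dpos: "\<forall>i<l. 1 \<le> d i" and kl: "l \<le> k"
begin

abbreviation IG :: "nat set" where "IG \<equiv> {1..k}"

definition inner :: "nat \<Rightarrow> tvert \<Rightarrow> bool" where
  "inner j v \<longleftrightarrow> (\<exists>m. 1 \<le> m \<and> m \<le> d j \<and> v = IV j m)"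

definition A :: "conf \<Rightarrow> nat \<Rightarrow> nat set" where
  "A c j = {a \<in> IG. inner j (c a)}"

definition nA :: "conf \<Rightarrow> nat \<Rightarrow> nat" where
  "nA c j = card (A c j)"

definition ea :: "conf \<Rightarrow> nat" where
  "ea c = (\<Sum>j<l. nA c j - 1)"

definition tp :: "conf \<Rightarrow> nat \<Rightarrow> nat" where
  "tp c j = Min ((\<lambda>a. ix (c a)) ` A c j)"

definition bt :: "conf \<Rightarrow> nat \<Rightarrow> nat" where
  "bt c j = Max ((\<lambda>a. ix (c a)) ` A c j)"

definition hh :: "conf \<Rightarrow> nat \<Rightarrow> nat" where
  "hh c j = (if 2 \<le> nA c j then tp c j + (Suc (d j) - bt c j) else 0)"

definition HH :: "conf \<Rightarrow> nat" where
  "HH c = (\<Sum>j<l. hh c j)"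

definition NA :: "conf \<Rightarrow> nat set" where "NA c = {a \<in> IG. c a = NP}"
definition SA :: "conf \<Rightarrow> nat set" where "SA c = {a \<in> IG. c a = SP}"
definition PA :: "conf \<Rightarrow> nat set" where "PA c = {a \<in> IG. c a = NP \<or> c a = SP}"

definition sg :: "conf \<Rightarrow> nat" where
  "sg c = (if c 0 = NP then (if \<exists>j<l. 2 \<le> nA c j \<and> tp c j = 1 \<and> bt c j = 1 then 1 else 0)
     else if c 0 = SP then (if \<exists>j<l. 2 \<le> nA c j \<and> tp c j = d j \<and> bt c j = d j then 1 else 0)
     else (let p = pth (c 0); q = ix (c 0) in
       if 2 \<le> nA c p \<and> tp c p = bt c p \<and> (tp c p = Suc q \<or> Suc (tp c p) = q) then
         (let w = 2 * q - tp c p in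
            if w = 0 \<or> w = Suc (d p) then (if \<exists>a\<in>IG. c a = nd d p w then 3 else 2) else 1)
       else 0))"

definition Dm :: nat where "Dm = (\<Sum>j<l. d j)"

fun rw :: "nat \<Rightarrow> tvert \<Rightarrow> nat" where
  "rw D NP = 0" | "rw D SP = Suc D" | "rw D (IV j m) = m"

definition RR :: "conf \<Rightarrow> nat" where "RR c = (\<Sum>a\<in>IG. rw Dm (c a))"

definition Dy :: "conf \<Rightarrow> nat" where
  "Dy c = (\<Sum>a\<in>A c (pth (c 0)). if ix (c a) < ix (c 0) then ix (c a) else 0)"

definition Cc :: "conf \<Rightarrow> nat" where
  "Cc c = (\<Sum>a\<in>A c (pth (c 0)). if ix (c 0) < ix (c a) then ix (c a) - ix (c 0) else 0)"

definition Fl :: "conf \<Rightarrow> nat" where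
  "Fl c = (if \<exists>a\<in>A c (pth (c 0)). ix (c 0) < ix (c a) then 0 else 1)"

fun gvv :: "nat \<Rightarrow> tvert \<Rightarrow> nat" where
  "gvv p (IV j m) = (if j \<noteq> p then Suc (d j) - m else 0)" | "gvv p NP = 0" | "gvv p SP = 0"

definition GG :: "conf \<Rightarrow> nat" where
  "GG c = (\<Sum>a\<in>IG. gvv (pth (c 0)) (c a))"

definition st :: "conf \<Rightarrow> nat" where
  "st c = (if 0 < ea c then 3 else if c 0 = SP then 2 else if c 0 = NP then 0 else 1)"

definition f1 where "f1 c = (if st c = 3 then ea c else if st c = 1 then ix (c 0) else if st c = 0 then RR c else 0)"
definition f2 where "f2 c = (if st c = 3 then HH c else if st c = 1 then Dy c else 0)"
definition f3 where "f3 c = (if st c = 3 then sg c else if st c = 1 then card (NA c) else 0)"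
definition f4 where "f4 c = (if st c = 3 then card (PA c) else if st c = 1 then GG c else 0)"
definition f5 where "f5 c = (if st c = 1 then Fl c else 0)"
definition f6 where "f6 c = (if st c = 1 then Cc c else 0)"

definition fs :: "(conf \<Rightarrow> nat) list" where "fs = [st, f1, f2, f3, f4, f5, f6]"


lemma inner_IV[simp]: "inner j (IV i m) \<longleftrightarrow> i = j \<and> 1 \<le> m \<and> m \<le> d j"
  unfolding inner_def by auto
lemma inner_NP[simp]: "\<not> inner j NP" unfolding inner_def by auto
lemma inner_SP[simp]: "\<not> inner j SP" unfolding inner_def by auto

lemma inner_E: "inner j v \<Longrightarrow> v = IV j (ix v) \<and> 1 \<le> ix v \<and> ix v \<le> d j"
  unfolding inner_def by auto

lemma inner_uniq: "inner j v \<Longrightarrow> inner j' v \<Longrightarrow> j = j'"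
  unfolding inner_def by auto

lemma nd_inner: "1 \<le> m \<Longrightarrow> m \<le> d j \<Longrightarrow> inner j (nd d j m)"
  by simp

lemma wfc_pos:
  assumes "wfc l d k c" "a \<le> k"
  shows "c a = NP \<or> c a = SP \<or> (\<exists>j<l. inner j (c a))"
  using assms unfolding wfc_def theta_V_def by auto

lemma wfc_ne: "wfc l d k c \<Longrightarrow> a \<in> IG \<Longrightarrow> c a \<noteq> c 0"
  unfolding wfc_def by auto

lemma A_sub: "A c j \<subseteq> IG" unfolding A_def by auto
lemma A_fin[simp]: "finite (A c j)" using A_sub finite_subset by blast
lemma A_mem: "a \<in> A c j \<longleftrightarrow> a \<in> IG \<and> inner j (c a)" unfolding A_def by auto

lemma A_disj: "j \<noteq> j' \<Longrightarrow> A c j \<inter> A c j' = {}"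
  unfolding A_def using inner_uniq by blast

lemma PA_fin[simp]: "finite (PA c)" unfolding PA_def by auto
lemma NA_fin[simp]: "finite (NA c)" unfolding NA_def by auto
lemma SA_fin[simp]: "finite (SA c)" unfolding SA_def by auto
lemma PA_NA_SA: "PA c = NA c \<union> SA c" unfolding PA_def NA_def SA_def by auto
lemma NA_SA_disj: "NA c \<inter> SA c = {}" unfolding NA_def SA_def by auto

lemma partition:
  assumes "wfc l d k c"
  shows "k = card (PA c) + (\<Sum>j<l. nA c j)"
proof -
  have U: "IG = PA c \<union> (\<Union>j<l. A c j)"
  proof
    show "IG \<subseteq> PA c \<union> (\<Union>j<l. A c j)"
    proof
      fix a assume a: "a \<in> IG"
      then have "a \<le> k" by simp
      from wfc_pos[OF assms this] show "a \<in> PA c \<union> (\<Union>j<l. A c j)"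
        using a unfolding PA_def A_def by auto
    qed
    show "PA c \<union> (\<Union>j<l. A c j) \<subseteq> IG" unfolding PA_def A_def by auto
  qed
  have D: "PA c \<inter> (\<Union>j<l. A c j) = {}" unfolding PA_def A_def by auto
  have "card (\<Union>j<l. A c j) = (\<Sum>j<l. card (A c j))"
    by (rule card_UN_disjoint) (auto dest: A_disj)
  then have "card IG = card (PA c) + (\<Sum>j<l. nA c j)"
    unfolding nA_def using U D by (simp add: card_Un_disjoint)
  then show ?thesis by simp
qed

lemma ix_A: "a \<in> A c j \<Longrightarrow> 1 \<le> ix (c a) \<and> ix (c a) \<le> d j \<and> c a = IV j (ix (c a))"
  unfolding A_def using inner_E by blast

lemma tp_le: "a \<in> A c j \<Longrightarrow> tp c j \<le> ix (c a)"
  unfolding tp_def by (rule Min_le) auto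
lemma bt_ge: "a \<in> A c j \<Longrightarrow> ix (c a) \<le> bt c j"
  unfolding bt_def by (rule Max_ge) auto
lemma tp_ex: "A c j \<noteq> {} \<Longrightarrow> \<exists>a\<in>A c j. ix (c a) = tp c j"
proof -
  assume "A c j \<noteq> {}"
  then have "tp c j \<in> (\<lambda>a. ix (c a)) ` A c j" unfolding tp_def by (intro Min_in) auto
  then show ?thesis by auto
qed
lemma bt_ex: "A c j \<noteq> {} \<Longrightarrow> \<exists>a\<in>A c j. ix (c a) = bt c j"
proof -
  assume "A c j \<noteq> {}"
  then have "bt c j \<in> (\<lambda>a. ix (c a)) ` A c j" unfolding bt_def by (intro Max_in) auto
  then show ?thesis by auto
qed
lemma tpI: "a \<in> A c j \<Longrightarrow> ix (c a) = x \<Longrightarrow> (\<And>b. b \<in> A c j \<Longrightarrow> x \<le> ix (c b)) \<Longrightarrow> tp c j = x"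
  unfolding tp_def by (rule Min_eqI) auto
lemma btI: "a \<in> A c j \<Longrightarrow> ix (c a) = x \<Longrightarrow> (\<And>b. b \<in> A c j \<Longrightarrow> ix (c b) \<le> x) \<Longrightarrow> bt c j = x"
  unfolding bt_def by (rule Max_eqI) auto

lemma ea_zero: "ea c = 0 \<longleftrightarrow> (\<forall>j<l. nA c j \<le> 1)"
  unfolding ea_def by auto

lemma sum_one_change:
  fixes f g :: "nat \<Rightarrow> nat"
  assumes "j < l" "\<And>x. x < l \<Longrightarrow> x \<noteq> j \<Longrightarrow> g x = f x"
  shows "(\<Sum>x<l. g x) + f j = (\<Sum>x<l. f x) + g j"
proof -
  have "(\<Sum>x<l. g x) = g j + (\<Sum>x\<in>{..<l} - {j}. g x)" using assms(1) by (simp add: sum.remove)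
  moreover have "(\<Sum>x<l. f x) = f j + (\<Sum>x\<in>{..<l} - {j}. f x)" using assms(1) by (simp add: sum.remove)
  moreover have "(\<Sum>x\<in>{..<l} - {j}. g x) = (\<Sum>x\<in>{..<l} - {j}. f x)" using assms(2) by (intro sum.cong) auto
  ultimately show ?thesis by simp
qed

lemma sum_agent_change:
  fixes f :: "nat \<Rightarrow> nat"
  assumes "a \<in> IG" "\<And>x. x \<in> IG \<Longrightarrow> x \<noteq> a \<Longrightarrow> g x = f x"
  shows "(\<Sum>x\<in>IG. g x) + f a = (\<Sum>x\<in>IG. f x) + g a"
proof -
  have "(\<Sum>x\<in>IG. g x) = g a + (\<Sum>x\<in>IG - {a}. g x)" using assms(1) by (simp add: sum.remove)
  moreover have "(\<Sum>x\<in>IG. f x) = f a + (\<Sum>x\<in>IG - {a}. f x)" using assms(1) by (simp add: sum.remove)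
  moreover have "(\<Sum>x\<in>IG - {a}. g x) = (\<Sum>x\<in>IG - {a}. f x)" using assms(2) by (intro sum.cong) auto
  ultimately show ?thesis by simp
qed

lemma A_other:
  assumes "\<And>a. a \<in> IG \<Longrightarrow> c' a \<noteq> c a \<Longrightarrow> \<not> inner j (c a) \<and> \<not> inner j (c' a)"
  shows "A c' j = A c j"
  unfolding A_def using assms by (auto, metis+)

lemma nd_path: "m \<le> Suc (d j) \<Longrightarrow> nd d j m \<in> path_nodes d j"
  unfolding path_nodes_def nd_def by auto
lemma IV_path: "IV j m \<in> path_nodes d j \<longleftrightarrow> 1 \<le> m \<and> m \<le> d j"
  unfolding path_nodes_def by auto
lemma NP_path[simp]: "NP \<in> path_nodes d j" unfolding path_nodes_def by auto
lemma SP_path[simp]: "SP \<in> path_nodes d j" unfolding path_nodes_def by auto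
lemma inner_path: "inner j v \<Longrightarrow> v \<in> path_nodes d j" unfolding inner_def path_nodes_def by auto
lemma IVpath_other: "IV j m \<in> path_nodes d i \<Longrightarrow> j = i" unfolding path_nodes_def by auto

lemma not_inner_other: "v \<in> path_nodes d j \<Longrightarrow> j' \<noteq> j \<Longrightarrow> \<not> inner j' v"
  unfolding path_nodes_def inner_def by auto

lemma lmoveI: "(\<And>a. a \<le> k \<Longrightarrow> c' a \<noteq> c a \<Longrightarrow> {c a, c' a} \<in> F) \<Longrightarrow> lmove k F c c'"
  unfolding lmove_def by blast

lemma ed_up: "ed d j m \<in> F \<Longrightarrow> {nd d j (Suc m), nd d j m} \<in> F"
  unfolding ed_def by (simp add: insert_commute)
lemma ed_dn: "ed d j m \<in> F \<Longrightarrow> {nd d j m, nd d j (Suc m)} \<in> F"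
  unfolding ed_def by simp

lemma in_fs: "(x, y) \<in> measures fs \<longleftrightarrow>
   st x < st y \<or> st x = st y \<and> (f1 x < f1 y \<or> f1 x = f1 y \<and> (f2 x < f2 y \<or> f2 x = f2 y \<and>
   (f3 x < f3 y \<or> f3 x = f3 y \<and> (f4 x < f4 y \<or> f4 x = f4 y \<and> (f5 x < f5 y \<or> f5 x = f5 y \<and> f6 x < f6 y)))))"
  unfolding fs_def by simp

lemma goodI1: "lmove k F c c' \<Longrightarrow> mt k c' = {} \<Longrightarrow> (c', c) \<in> measures fs \<Longrightarrow> good l d k fs F c c'"
  unfolding good_def by blast
lemma goodI2: "lmove k F c c' \<Longrightarrow> mt k c' \<noteq> {} \<Longrightarrow> tgt l d k c' (insert 0 (mt k c')) \<Longrightarrow> good l d k fs F c c'"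
  unfolding good_def by blast

lemma dec3:
  assumes "0 < ea c"
    "ea c' < ea c \<or> ea c' = ea c \<and> (HH c' < HH c \<or> HH c' = HH c \<and> (sg c' < sg c \<or> sg c' = sg c \<and> card (PA c') < card (PA c)))"
  shows "(c', c) \<in> measures fs"
proof (cases "ea c' = 0")
  case True
  then have "st c' < st c" using assms(1) unfolding st_def by auto
  then show ?thesis unfolding in_fs by blast
next
  case False
  then have "st c' = 3" "st c = 3" using assms(1) unfolding st_def by auto
  then show ?thesis using assms(2) unfolding in_fs f1_def f2_def f3_def f4_def by auto
qed

end


context TG begin

lemma tgt_intro:
  assumes i: "i < l" and ab: "a \<noteq> b" "a \<in> IS" "b \<in> IS" "c a \<in> path_nodes d i" "c b \<in> path_nodes d i"
    and IS: "0 \<notin> IG"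
    and cnt: "card {j. j < l \<and> j \<noteq> i \<and> (\<forall>g\<in>IG - IS. \<not> inner j (c g))}
              \<le> card {g \<in> IG - IS. c g = NP \<or> c g = SP}"
  shows "tgt l d k c IS"
proof -
  let ?U = "{j. j < l \<and> j \<noteq> i \<and> (\<forall>g\<in>IG - IS. \<not> inner j (c g))}"
  let ?P = "{g \<in> IG - IS. c g = NP \<or> c g = SP}"
  obtain h where h: "h ` ?U \<subseteq> ?P" "inj_on h ?U" using card_le_inj[OF _ _ cnt] by auto
  define f where "f j = (if j \<in> ?U then h j else (SOME g. g \<in> IG - IS \<and> inner j (c g)))" for j
  have fcov: "f j \<in> IG - IS \<and> inner j (c (f j))" if "j < l" "j \<noteq> i" "j \<notin> ?U" for j
  proof -
    have ex: "\<exists>g. g \<in> IG - IS \<and> inner j (c g)" using that by auto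
    have "f j = (if j \<in> ?U then h j else (SOME g. g \<in> IG - IS \<and> inner j (c g)))" by (simp only: f_def)
    also have "\<dots> = (SOME g. g \<in> IG - IS \<and> inner j (c g))" using that(3) by (rule if_not_P)
    finally have "f j = (SOME g. g \<in> IG - IS \<and> inner j (c g))" .
    then show ?thesis using someI_ex[OF ex] by simp
  qed
  have func: "f j \<in> ?P" if "j \<in> ?U" for j using that h unfolding f_def by auto
  have inj: "inj_on f ({..<l} - {i})"
  proof (rule inj_onI)
    fix x y assume x: "x \<in> {..<l} - {i}" and y: "y \<in> {..<l} - {i}" and e: "f x = f y"
    show "x = y"
    proof (cases "x \<in> ?U")
      case True
      show ?thesis
      proof (cases "y \<in> ?U")
        case True
        then show ?thesis using \<open>x \<in> ?U\<close> e h(2) unfolding f_def by (auto dest: inj_onD)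
      next
        case False
        have "inner y (c (f y))" using fcov[of y] y False by auto
        moreover have "c (f x) = NP \<or> c (f x) = SP" using func[OF \<open>x \<in> ?U\<close>] by auto
        ultimately show ?thesis using e by auto
      qed
    next
      case False
      have ix: "inner x (c (f x))" using fcov[of x] x False by auto
      show ?thesis
      proof (cases "y \<in> ?U")
        case True
        have "c (f y) = NP \<or> c (f y) = SP" using func[OF True] by auto
        then show ?thesis using e ix by auto
      next
        case False
        have "inner y (c (f y))" using fcov[of y] y False by auto
        then show ?thesis using e ix inner_uniq by metis
      qed
    qed
  qed
  have props: "f j \<le> k \<and> f j \<notin> IS \<and> c (f j) \<in> path_nodes d j" if "j \<in> {..<l} - {i}" for j
  proof (cases "j \<in> ?U")
    case True
    then show ?thesis using func[OF True] by auto
  next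
    case False
    then show ?thesis using fcov[of j] that inner_path by auto
  qed
  show ?thesis unfolding tgt_def using i ab inj props by blast
qed

lemma count0:
  assumes "wfc l d k c" "ea c = 0"
  shows "card (PA c) + l = k + card {j. j < l \<and> nA c j = 0}"
proof -
  have le1: "nA c j \<le> 1" if "j < l" for j using assms(2) that ea_zero by blast
  have "(\<Sum>j<l. nA c j) = (\<Sum>j\<in>{j. j < l \<and> nA c j \<noteq> 0}. 1)"
  proof -
    have "(\<Sum>j<l. nA c j) = (\<Sum>j\<in>{j. j < l \<and> nA c j \<noteq> 0}. nA c j)"
      by (rule sum.mono_neutral_right) auto
    also have "\<dots> = (\<Sum>j\<in>{j. j < l \<and> nA c j \<noteq> 0}. 1)"
    proof (rule sum.cong)
      fix x assume "x \<in> {j. j < l \<and> nA c j \<noteq> 0}"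
      then show "nA c x = 1" using le1[of x] by simp
    qed simp
    finally show ?thesis .
  qed
  also have "\<dots> = card {j. j < l \<and> nA c j \<noteq> 0}" by simp
  finally have s: "(\<Sum>j<l. nA c j) = card {j. j < l \<and> nA c j \<noteq> 0}" .
  have "card {j. j < l \<and> nA c j \<noteq> 0} + card {j. j < l \<and> nA c j = 0} = l"
  proof -
    have "{j. j < l \<and> nA c j \<noteq> 0} \<union> {j. j < l \<and> nA c j = 0} = {..<l}" by auto
    moreover have "{j. j < l \<and> nA c j \<noteq> 0} \<inter> {j. j < l \<and> nA c j = 0} = {}" by auto
    ultimately show ?thesis using card_Un_disjoint[of "{j. j < l \<and> nA c j \<noteq> 0}" "{j. j < l \<and> nA c j = 0}"]
      by simp
  qed
  then show ?thesis using partition[OF assms(1)] s by simp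
qed

lemma A_upd: "A (c(a := v)) j = (A c j - {a}) \<union> (if a \<in> IG \<and> inner j v then {a} else {})"
  unfolding A_def by auto

lemma A_upd_same: "a \<in> A c j \<Longrightarrow> inner j v \<Longrightarrow> A (c(a := v)) j' = A c j'"
  unfolding A_def using inner_uniq by auto

lemma A_upd_0: "A (c(0 := v)) j = A c j"
  unfolding A_def by auto

lemma nA_upd_same: "a \<in> A c j \<Longrightarrow> inner j v \<Longrightarrow> nA (c(a := v)) j' = nA c j'"
  unfolding nA_def using A_upd_same by simp

lemma ea_eq: "(\<And>j. j < l \<Longrightarrow> nA c' j = nA c j) \<Longrightarrow> ea c' = ea c"
  unfolding ea_def by simp

lemma PA_mem: "g \<in> PA c \<longleftrightarrow> g \<in> IG \<and> (c g = NP \<or> c g = SP)" unfolding PA_def by auto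
lemma NA_mem: "g \<in> NA c \<longleftrightarrow> g \<in> IG \<and> c g = NP" unfolding NA_def by auto
lemma SA_mem: "g \<in> SA c \<longleftrightarrow> g \<in> IG \<and> c g = SP" unfolding SA_def by auto

lemma Dm_ge: "j < l \<Longrightarrow> d j \<le> Dm"
  unfolding Dm_def by (rule member_le_sum) auto

lemma intact': "validF l d F \<Longrightarrow> \<exists>r<l. \<forall>m\<le>d r. ed d r m \<in> F"
  using intact dpos by blast

lemma one_cut': "validF l d F \<Longrightarrow> j < l \<Longrightarrow> m1 \<le> d j \<Longrightarrow> m2 \<le> d j \<Longrightarrow> ed d j m1 \<notin> F \<Longrightarrow> ed d j m2 \<notin> F \<Longrightarrow> m1 = m2"
  using one_cut dpos by blast

lemma st_NP: "ea c = 0 \<Longrightarrow> c 0 = NP \<Longrightarrow> st c = 0" unfolding st_def by simp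

lemma stageC:
  assumes W: "wfc l d k c" and F: "validF l d F" and e0: "ea c = 0" and s: "c 0 = NP"
  shows "\<exists>c'. good l d k fs F c c'"
proof -
  obtain r where r: "r < l" "\<And>m. m \<le> d r \<Longrightarrow> ed d r m \<in> F" using intact'[OF F] by blast
  have NA0: "NA c = {}" using W s unfolding NA_def wfc_def by auto
  have cnt: "card (PA c) + l = k + card {j. j < l \<and> nA c j = 0}" using count0[OF W e0] .
  show ?thesis
  proof (cases "A c r = {}")
    case False
    then obtain a where a: "a \<in> A c r" by blast
    define m where "m = ix (c a)"
    have m: "1 \<le> m" "m \<le> d r" "c a = IV r m" using ix_A[OF a] unfolding m_def by auto
    have aIG: "a \<in> IG" using a A_sub by blast
    define c' where "c' = c(a := nd d r (m - 1))"
    have lm: "lmove k F c c'"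
    proof (rule lmoveI)
      fix g assume "g \<le> k" "c' g \<noteq> c g"
      then have "g = a" unfolding c'_def by (cases "g = a") auto
      have "ed d r (m - 1) \<in> F" using r(2) m by simp
      then have "{nd d r (Suc (m - 1)), nd d r (m - 1)} \<in> F" by (rule ed_up)
      then show "{c g, c' g} \<in> F" using \<open>g = a\<close> m unfolding c'_def by simp
    qed
    have c'0: "c' 0 = NP" using s aIG unfolding c'_def by auto
    show ?thesis
    proof (cases "m = 1")
      case True
      have mt: "mt k c' = {a}"
      proof -
        have "g \<notin> mt k c'" if "g \<noteq> a" for g
          using that W s aIG unfolding mt_def c'_def wfc_def by auto
        moreover have "a \<in> mt k c'" using aIG True c'0 unfolding mt_def c'_def by simp
        ultimately show ?thesis by blast
      qed
      have t: "tgt l d k c' (insert 0 (mt k c'))"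
      proof -
        have U: "{j. j < l \<and> j \<noteq> r \<and> (\<forall>g\<in>IG - insert 0 (mt k c'). \<not> inner j (c' g))}
                  \<subseteq> {j. j < l \<and> nA c j = 0}"
        proof
          fix j assume j: "j \<in> {j. j < l \<and> j \<noteq> r \<and> (\<forall>g\<in>IG - insert 0 (mt k c'). \<not> inner j (c' g))}"
          have "A c j = {}"
          proof (rule ccontr)
            assume "A c j \<noteq> {}"
            then obtain g where g: "g \<in> A c j" by blast
            have "g \<noteq> a" using g a j A_disj by blast
            then have "inner j (c' g)" "g \<in> IG" using g unfolding c'_def A_def by auto
            then show False using j \<open>g \<noteq> a\<close> mt by auto
          qed
          then show "j \<in> {j. j < l \<and> nA c j = 0}" using j unfolding nA_def by simp
        qed
        have P: "PA c \<subseteq> {g \<in> IG - insert 0 (mt k c'). c' g = NP \<or> c' g = SP}"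
        proof
          fix g assume g: "g \<in> PA c"
          then have "g \<noteq> a" using m aIG unfolding PA_def by auto
          then show "g \<in> {g \<in> IG - insert 0 (mt k c'). c' g = NP \<or> c' g = SP}"
            using g mt unfolding PA_def c'_def by auto
        qed
        have c1: "card {j. j < l \<and> j \<noteq> r \<and> (\<forall>g\<in>IG - insert 0 (mt k c'). \<not> inner j (c' g))}
          \<le> card {j. j < l \<and> nA c j = 0}" by (rule card_mono[OF _ U]) simp
        have c2: "card {j. j < l \<and> nA c j = 0} \<le> card (PA c)" using cnt kl by simp
        have c3: "card (PA c) \<le> card {g \<in> IG - insert 0 (mt k c'). c' g = NP \<or> c' g = SP}"
          by (rule card_mono[OF _ P]) auto
        have "card {j. j < l \<and> j \<noteq> r \<and> (\<forall>g\<in>IG - insert 0 (mt k c'). \<not> inner j (c' g))}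
          \<le> card {g \<in> IG - insert 0 (mt k c'). c' g = NP \<or> c' g = SP}"
          using c1 c2 c3 by linarith
        moreover have "c' a \<in> path_nodes d r" "c' 0 \<in> path_nodes d r" using True c'0 unfolding c'_def by auto
        ultimately show ?thesis
          using tgt_intro[of r a 0 "insert 0 (mt k c')" c'] r aIG mt by auto
      qed
      show ?thesis using goodI2[OF lm _ t] mt by auto
    next
      case False
      have "1 \<le> m - 1" "m - 1 \<le> d r" using False m by auto
      then have in2: "inner r (nd d r (m - 1))" by simp
      have Aeq: "A c' j = A c j" for j unfolding c'_def using A_upd_same[OF a in2] by simp
      have ea': "ea c' = 0" using e0 Aeq unfolding ea_def nA_def by simp
      have mt: "mt k c' = {}"
        using W s False m aIG unfolding mt_def c'_def wfc_def by (auto simp: nd_def)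
      have "RR c' + rw Dm (c a) = RR c + rw Dm (c' a)"
        unfolding RR_def by (rule sum_agent_change[OF aIG]) (simp add: c'_def)
      moreover have "rw Dm (c' a) < rw Dm (c a)"
      proof -
        have "c' a = IV r (m - 1)" using \<open>1 \<le> m - 1\<close> \<open>m - 1 \<le> d r\<close> unfolding c'_def by simp
        then show ?thesis using m False by simp
      qed
      ultimately have "RR c' < RR c" by simp
      then have "(c', c) \<in> measures fs"
        using ea' e0 s c'0 unfolding in_fs st_def f1_def by simp
      then show ?thesis using goodI1[OF lm mt] by blast
    qed
  next
    case True
    have "r \<in> {j. j < l \<and> nA c j = 0}" using True r unfolding nA_def by simp
    then have "card {j. j < l \<and> nA c j = 0} \<ge> 1"
      by (metis One_nat_def Suc_leI card_gt_0_iff empty_iff finite_Collect_conjI finite_lessThan lessThan_def)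
    then have "card (PA c) \<ge> 1" using cnt kl by simp
    then have "SA c \<noteq> {}" using NA0 PA_NA_SA by (metis card.empty not_one_le_zero sup_bot.left_neutral)
    then obtain a where a: "a \<in> SA c" by blast
    have aIG: "a \<in> IG" and ca: "c a = SP" using a unfolding SA_def by auto
    define c' where "c' = c(a := IV r (d r))"
    have dr: "1 \<le> d r" using dpos r by blast
    have lm: "lmove k F c c'"
    proof (rule lmoveI)
      fix g assume "g \<le> k" "c' g \<noteq> c g"
      then have "g = a" unfolding c'_def by (cases "g = a") auto
      have "ed d r (d r) \<in> F" using r(2) by simp
      then have "{nd d r (Suc (d r)), nd d r (d r)} \<in> F" by (rule ed_up)
      then show "{c g, c' g} \<in> F" using \<open>g = a\<close> ca dr unfolding c'_def by simp
    qed
    have c'0: "c' 0 = NP" using s aIG unfolding c'_def by auto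
    have mt: "mt k c' = {}" using W s aIG unfolding mt_def c'_def wfc_def by auto
    have nA': "nA c' j \<le> 1" if "j < l" for j
    proof (cases "j = r")
      case True
      have "A c' r = {a}" using \<open>A c r = {}\<close> aIG dr unfolding c'_def A_upd by auto
      then show ?thesis using True unfolding nA_def by simp
    next
      case False
      have "A c' j = A c j" unfolding c'_def A_upd using False ca by (auto simp: A_def)
      then show ?thesis using e0 that ea_zero unfolding nA_def by metis
    qed
    then have ea': "ea c' = 0" using ea_zero by blast
    have "RR c' + rw Dm (c a) = RR c + rw Dm (c' a)"
      unfolding RR_def by (rule sum_agent_change[OF aIG]) (simp add: c'_def)
    moreover have "rw Dm (c' a) < rw Dm (c a)" using ca Dm_ge[OF r(1)] unfolding c'_def by simp
    ultimately have "RR c' < RR c" by simp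
    then have "(c', c) \<in> measures fs"
      using ea' e0 s c'0 unfolding in_fs st_def f1_def by simp
    then show ?thesis using goodI1[OF lm mt] by blast
  qed
qed

end


context TG begin

lemma s_inner:
  assumes "wfc l d k c" "c 0 \<noteq> NP" "c 0 \<noteq> SP"
  shows "\<exists>p q. c 0 = IV p q \<and> p < l \<and> 1 \<le> q \<and> q \<le> d p"
proof -
  obtain j where "j < l" "inner j (c 0)" using wfc_pos[OF assms(1), of 0] assms(2,3) by auto
  then show ?thesis using inner_E by blast
qed

lemma A_le1:
  assumes "ea c = 0" "j < l"
  shows "A c j = {} \<or> (\<exists>y. A c j = {y})"
proof (cases "A c j = {}")
  case False
  then obtain y where y: "y \<in> A c j" by blast
  have "nA c j \<le> 1" using assms ea_zero by blast
  then have "\<forall>a\<in>A c j. \<forall>b\<in>A c j. a = b" unfolding nA_def using card_le_Suc0_iff_eq[of "A c j"] by simp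
  then have "A c j = {y}" using y by blast
  then show ?thesis by blast
qed simp

lemma tgt_count:
  assumes W: "wfc l d k c" and M: "M \<subseteq> IG" "y \<in> M" and i: "i < l"
    and p0: "c' 0 \<in> path_nodes d i" "c' y \<in> path_nodes d i"
    and same: "\<And>g. g \<in> IG \<Longrightarrow> g \<notin> M \<Longrightarrow> c' g = c g"
    and disj: "\<And>j. j < l \<Longrightarrow> j \<noteq> i \<Longrightarrow> A c j \<inter> M = {}"
    and cnt: "card ({j. j < l \<and> nA c j = 0} - {i}) \<le> card (PA c - M)"
  shows "tgt l d k c' (insert 0 M)"
proof -
  let ?U = "{j. j < l \<and> j \<noteq> i \<and> (\<forall>g\<in>IG - insert 0 M. \<not> inner j (c' g))}"
  let ?P = "{g \<in> IG - insert 0 M. c' g = NP \<or> c' g = SP}"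
  have y0: "y \<noteq> 0" using M by auto
  have U: "?U \<subseteq> {j. j < l \<and> nA c j = 0} - {i}"
  proof
    fix j assume j: "j \<in> ?U"
    have "A c j = {}"
    proof (rule ccontr)
      assume "A c j \<noteq> {}"
      then obtain g where g: "g \<in> A c j" by blast
      have "g \<notin> M" using g disj[of j] j by auto
      then have "inner j (c' g)" "g \<in> IG - insert 0 M" using g same[of g] unfolding A_def by auto
      then show False using j by auto
    qed
    then show "j \<in> {j. j < l \<and> nA c j = 0} - {i}" using j unfolding nA_def by simp
  qed
  have P: "PA c - M \<subseteq> ?P"
  proof
    fix g assume g: "g \<in> PA c - M"
    then show "g \<in> ?P" using same[of g] unfolding PA_def by auto
  qed
  have c1: "card ?U \<le> card ({j. j < l \<and> nA c j = 0} - {i})" by (rule card_mono[OF _ U]) simp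
  have c3: "card (PA c - M) \<le> card ?P" by (rule card_mono[OF _ P]) simp
  have "card ?U \<le> card ?P" using c1 cnt c3 by linarith
  then show ?thesis
    using tgt_intro[of i 0 y "insert 0 M" c'] i y0 M p0 by auto
qed

lemma cardZ_le:
  assumes "wfc l d k c" "ea c = 0"
  shows "card {j. j < l \<and> nA c j = 0} \<le> card (PA c)"
  using count0[OF assms] kl by simp

lemma dec1:
  assumes "st c = 1" "ea c' = 0" "c' 0 \<noteq> NP" "c' 0 \<noteq> SP"
    "ix (c' 0) < ix (c 0) \<or> ix (c' 0) = ix (c 0) \<and> (Dy c' < Dy c \<or> Dy c' = Dy c \<and>
      (card (NA c') < card (NA c) \<or> card (NA c') = card (NA c) \<and> (GG c' < GG c \<or> GG c' = GG c \<and>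
      (Fl c' < Fl c \<or> Fl c' = Fl c \<and> Cc c' < Cc c))))"
  shows "(c', c) \<in> measures fs"
proof -
  have "st c' = 1" using assms(2,3,4) unfolding st_def by simp
  then show ?thesis using assms(1,5) unfolding in_fs f1_def f2_def f3_def f4_def f5_def f6_def by auto
qed

lemma mt_empty: "(\<And>g. g \<in> IG \<Longrightarrow> c' g \<noteq> c' 0) \<Longrightarrow> mt k c' = {}"
  unfolding mt_def by auto

lemma stageS:
  assumes W: "wfc l d k c" and F: "validF l d F" and e0: "ea c = 0" and s: "c 0 = SP"
  shows "\<exists>c'. good l d k fs F c c'"
proof -
  obtain r where r: "r < l" "\<And>m. m \<le> d r \<Longrightarrow> ed d r m \<in> F" using intact'[OF F] by blast
  have dr: "1 \<le> d r" using dpos r by blast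
  define M where "M = {g \<in> IG. c g = IV r (d r)}"
  define c' where "c' = (\<lambda>g. if g \<in> M then nd d r (d r - 1) else c g)(0 := IV r (d r))"
  have ndr: "nd d r (d r) = IV r (d r)" using dr by simp
  have lm: "lmove k F c c'"
  proof (rule lmoveI)
    fix g assume g: "g \<le> k" "c' g \<noteq> c g"
    show "{c g, c' g} \<in> F"
    proof (cases "g = 0")
      case True
      have "{nd d r (Suc (d r)), nd d r (d r)} \<in> F" using r(2)[of "d r"] by (intro ed_up) simp
      then show ?thesis using True s ndr unfolding c'_def by simp
    next
      case False
      then have "g \<in> M" using g unfolding c'_def by (cases "g \<in> M") auto
      have "{nd d r (Suc (d r - 1)), nd d r (d r - 1)} \<in> F" using r(2)[of "d r - 1"] by (intro ed_up) simp
      then show ?thesis using \<open>g \<in> M\<close> False dr ndr unfolding c'_def M_def by simp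
    qed
  qed
  have mt: "mt k c' = {}"
  proof (rule mt_empty)
    fix g assume g: "g \<in> IG"
    show "c' g \<noteq> c' 0"
    proof (cases "g \<in> M")
      case True
      then show ?thesis using g dr unfolding c'_def by (auto simp: nd_def)
    next
      case False
      then show ?thesis using g unfolding c'_def M_def by auto
    qed
  qed
  have sub: "A c' j \<subseteq> A c j" for j
  proof
    fix g assume g: "g \<in> A c' j"
    then have gIG: "g \<in> IG" and ij: "inner j (c' g)" unfolding A_def by auto
    show "g \<in> A c j"
    proof (cases "g \<in> M")
      case True
      then have "inner j (nd d r (d r - 1))" using ij gIG unfolding c'_def by auto
      then have "j = r" by (auto simp: nd_def split: if_splits)
      then show ?thesis using True dr unfolding M_def A_def by auto
    next
      case False
      then show ?thesis using g gIG unfolding c'_def A_def by auto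
    qed
  qed
  have "nA c' j \<le> 1" if "j < l" for j
  proof -
    have "nA c' j \<le> nA c j" unfolding nA_def by (rule card_mono[OF _ sub]) simp
    then show ?thesis using e0 that ea_zero by fastforce
  qed
  then have e': "ea c' = 0" using ea_zero by blast
  have "st c' = 1" using e' unfolding st_def c'_def by simp
  moreover have "st c = 2" using e0 s unfolding st_def by simp
  ultimately have "(c', c) \<in> measures fs" unfolding in_fs by simp
  then show ?thesis using goodI1[OF lm mt] by blast
qed

end


context TG begin

lemma DFC_eq:
  assumes "c' 0 = c 0" "A c' (pth (c 0)) = A c (pth (c 0))" "\<And>a. a \<in> A c (pth (c 0)) \<Longrightarrow> c' a = c a"
  shows "Dy c' = Dy c" "Fl c' = Fl c" "Cc c' = Cc c"
  unfolding Dy_def Fl_def Cc_def using assms by (auto intro!: sum.cong)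

lemma NA_upd: "NA (c(g := v)) = (NA c - {g}) \<union> (if g \<in> IG \<and> v = NP then {g} else {})"
  unfolding NA_def by auto
lemma SA_upd: "SA (c(g := v)) = (SA c - {g}) \<union> (if g \<in> IG \<and> v = SP then {g} else {})"
  unfolding SA_def by auto
lemma NA_upd0: "NA (c(0 := v)) = NA c" unfolding NA_def by auto
lemma PA_upd0: "PA (c(0 := v)) = PA c" unfolding PA_def by auto

lemma GG_upd:
  assumes "g \<in> IG" "c' = c(g := v)" "c' 0 = c 0"
  shows "GG c' + gvv (pth (c 0)) (c g) = GG c + gvv (pth (c 0)) v"
proof -
  have "GG c' = (\<Sum>a\<in>IG. gvv (pth (c 0)) (c' a))" unfolding GG_def using assms(3) by simp
  moreover have "(\<Sum>a\<in>IG. gvv (pth (c 0)) (c' a)) + gvv (pth (c 0)) (c g) = (\<Sum>a\<in>IG. gvv (pth (c 0)) (c a)) + gvv (pth (c 0)) (c' g)"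
    by (rule sum_agent_change[OF assms(1)]) (simp add: assms(2))
  ultimately show ?thesis unfolding GG_def using assms(2) by simp
qed

lemma st1: "ea c = 0 \<Longrightarrow> c 0 = IV p q \<Longrightarrow> st c = 1"
  unfolding st_def by simp

lemma settle_guard:
  assumes W: "wfc l d k c" and e0: "ea c = 0" and s: "c 0 = IV p q" "p < l" "1 \<le> q" "q \<le> d p"
    and r: "r < l" "r \<noteq> p" "\<And>m. m \<le> d r \<Longrightarrow> ed d r m \<in> F"
    and N: "A c r = {} \<Longrightarrow> NA c \<noteq> {}"
  shows "\<exists>c'. good l d k fs F c c'"
proof -
  have dr: "1 \<le> d r" using dpos r by blast
  have st: "st c = 1" using st1[OF e0 s(1)] .
  show ?thesis
  proof (cases "A c r = {}")
    case True
    then obtain z where z: "z \<in> NA c" using N by blast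
    have zIG: "z \<in> IG" and cz: "c z = NP" using z unfolding NA_def by auto
    define c' where "c' = c(z := IV r 1)"
    have lm: "lmove k F c c'"
    proof (rule lmoveI)
      fix g assume "g \<le> k" "c' g \<noteq> c g"
      then have "g = z" unfolding c'_def by (cases "g = z") auto
      have "{nd d r 0, nd d r (Suc 0)} \<in> F" using r(3)[of 0] by (intro ed_dn) simp
      then show "{c g, c' g} \<in> F" using \<open>g = z\<close> cz dr unfolding c'_def by simp
    qed
    have c'0: "c' 0 = c 0" using zIG unfolding c'_def by auto
    have mt: "mt k c' = {}"
    proof (rule mt_empty)
      fix g assume g: "g \<in> IG"
      show "c' g \<noteq> c' 0"
        using g c'0 s r(2) wfc_ne[OF W g] unfolding c'_def by auto
    qed
    have Ar: "A c' r = {z}" using True zIG dr unfolding c'_def A_upd by auto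
    have Aj: "A c' j = A c j" if "j \<noteq> r" for j using that cz unfolding c'_def A_upd by (auto simp: A_def)
    have e': "ea c' = 0"
    proof -
      have "nA c' j \<le> 1" if "j < l" for j
      proof (cases "j = r")
        case True
        then show ?thesis using Ar unfolding nA_def by simp
      next
        case False
        then show ?thesis using Aj[OF False] e0 that ea_zero unfolding nA_def by metis
      qed
      then show ?thesis using ea_zero by blast
    qed
    have DFC: "Dy c' = Dy c" "Fl c' = Fl c" "Cc c' = Cc c"
    proof -
      have Ap: "A c' p = A c p" using Aj[of p] r(2) by simp
      have "c' a = c a" if "a \<in> A c p" for a
      proof -
        have "a \<noteq> z" using that cz unfolding A_def by auto
        then show ?thesis unfolding c'_def by simp
      qed
      then show "Dy c' = Dy c" "Fl c' = Fl c" "Cc c' = Cc c"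
        using DFC_eq[of c' c] c'0 Ap s by auto
    qed
    have "NA c' = NA c - {z}" using cz unfolding c'_def NA_upd by auto
    then have "card (NA c') < card (NA c)" using z card_Diff1_less[OF NA_fin z] by simp
    then have "(c', c) \<in> measures fs"
      using dec1[OF st e'] c'0 s DFC by simp
    then show ?thesis using goodI1[OF lm mt] by blast
  next
    case False
    then obtain g where Ag: "A c r = {g}" using A_le1[OF e0 r(1)] by blast
    then have gA: "g \<in> A c r" by simp
    define m where "m = ix (c g)"
    have m: "1 \<le> m" "m \<le> d r" "c g = IV r m" using ix_A[OF gA] unfolding m_def by auto
    have gIG: "g \<in> IG" using gA A_sub by blast
    define c' where "c' = c(g := nd d r (Suc m))"
    have lm: "lmove k F c c'"
    proof (rule lmoveI)
      fix h assume "h \<le> k" "c' h \<noteq> c h"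
      then have "h = g" unfolding c'_def by (cases "h = g") auto
      have "{nd d r m, nd d r (Suc m)} \<in> F" using r(3)[of m] m by (intro ed_dn) simp
      then show "{c h, c' h} \<in> F" using \<open>h = g\<close> m unfolding c'_def by simp
    qed
    have c'0: "c' 0 = c 0" using gIG unfolding c'_def by auto
    have new: "nd d r (Suc m) = SP \<or> nd d r (Suc m) = IV r (Suc m)" by (auto simp: nd_def)
    have mt: "mt k c' = {}"
    proof (rule mt_empty)
      fix h assume h: "h \<in> IG"
      show "c' h \<noteq> c' 0"
        using h c'0 s r(2) wfc_ne[OF W h] new unfolding c'_def by auto
    qed
    have sub: "A c' j \<subseteq> A c j" for j
    proof
      fix h assume h: "h \<in> A c' j"
      show "h \<in> A c j"
      proof (cases "h = g")
        case True
        then have "inner j (nd d r (Suc m))" using h unfolding c'_def A_def by auto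
        then have "j = r" using new by auto
        then show ?thesis using True gA by simp
      next
        case False
        then show ?thesis using h unfolding c'_def A_def by auto
      qed
    qed
    have e': "ea c' = 0"
    proof -
      have "nA c' j \<le> 1" if "j < l" for j
      proof -
        have "nA c' j \<le> nA c j" unfolding nA_def by (rule card_mono[OF _ sub]) simp
        then show ?thesis using e0 that ea_zero by fastforce
      qed
      then show ?thesis using ea_zero by blast
    qed
    have Ap: "A c' p = A c p"
    proof -
      have "A c' p \<subseteq> A c p" by (rule sub)
      moreover have "A c p \<subseteq> A c' p"
      proof
        fix h assume h: "h \<in> A c p"
        then have "h \<noteq> g" using gA A_disj r(2) by blast
        then show "h \<in> A c' p" using h unfolding c'_def A_def by auto
      qed
      ultimately show ?thesis by blast
    qed
    have DFC: "Dy c' = Dy c" "Fl c' = Fl c" "Cc c' = Cc c"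
    proof -
      have "c' a = c a" if "a \<in> A c p" for a
        using that gA A_disj r(2) unfolding c'_def by auto
      then show "Dy c' = Dy c" "Fl c' = Fl c" "Cc c' = Cc c"
        using DFC_eq[of c' c] c'0 Ap s by auto
    qed
    have NAe: "NA c' = NA c" using m new unfolding c'_def NA_upd by (auto simp: NA_def)
    have "GG c' + gvv p (c g) = GG c + gvv p (nd d r (Suc m))"
      using GG_upd[OF gIG c'_def c'0] s by simp
    moreover have "gvv p (nd d r (Suc m)) < gvv p (c g)"
      using new m r(2) by (auto simp: nd_def split: if_splits)
    ultimately have "GG c' < GG c" by simp
    then have "(c', c) \<in> measures fs"
      using dec1[OF st e'] c'0 s DFC NAe by simp
    then show ?thesis using goodI1[OF lm mt] by blast
  qed
qed

end


context TG begin

lemma mt_upd: "wfc l d k c \<Longrightarrow> y \<in> IG \<Longrightarrow> mt k (c(y := v)) = (if v = c 0 then {y} else {})"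
  unfolding mt_def wfc_def by auto

lemma mt_upd0: "mt k (c(0 := v)) = {g \<in> IG. c g = v}"
  unfolding mt_def by auto

lemma tgt_inner_meet:
  assumes W: "wfc l d k c" and e0: "ea c = 0" and y: "y \<in> A c p" and p: "p < l"
    and P: "c' 0 \<in> path_nodes d p" "c' y \<in> path_nodes d p" and same: "\<And>g. g \<in> IG \<Longrightarrow> g \<noteq> y \<Longrightarrow> c' g = c g"
  shows "tgt l d k c' (insert 0 {y})"
proof (rule tgt_count[OF W _ _ p P])
  show "{y} \<subseteq> IG" using y A_sub by blast
  show "y \<in> {y}" by simp
  show "\<And>g. g \<in> IG \<Longrightarrow> g \<notin> {y} \<Longrightarrow> c' g = c g" using same by blast
  show "\<And>j. j < l \<Longrightarrow> j \<noteq> p \<Longrightarrow> A c j \<inter> {y} = {}" using y A_disj by blast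
  have "y \<notin> PA c" using y unfolding A_def PA_def by auto
  then have "PA c - {y} = PA c" by simp
  moreover have "card ({j. j < l \<and> nA c j = 0} - {p}) \<le> card {j. j < l \<and> nA c j = 0}"
    by (rule card_mono) auto
  ultimately show "card ({j. j < l \<and> nA c j = 0} - {p}) \<le> card (PA c - {y})"
    using cardZ_le[OF W e0] by simp
qed

lemma tgt_pole_meet:
  assumes W: "wfc l d k c" and e0: "ea c = 0" and z: "z \<in> PA c" and p: "p < l" and Ap: "A c p = {}"
    and P: "c' 0 \<in> path_nodes d p" "c' z \<in> path_nodes d p" and same: "\<And>g. g \<in> IG \<Longrightarrow> g \<noteq> z \<Longrightarrow> c' g = c g"
  shows "tgt l d k c' (insert 0 {z})"
proof (rule tgt_count[OF W _ _ p P])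
  show "{z} \<subseteq> IG" using z unfolding PA_def by blast
  show "z \<in> {z}" by simp
  show "\<And>g. g \<in> IG \<Longrightarrow> g \<notin> {z} \<Longrightarrow> c' g = c g" using same by blast
  show "\<And>j. j < l \<Longrightarrow> j \<noteq> p \<Longrightarrow> A c j \<inter> {z} = {}" using z unfolding A_def PA_def by auto
  have pZ: "p \<in> {j. j < l \<and> nA c j = 0}" using p Ap unfolding nA_def by simp
  have "card ({j. j < l \<and> nA c j = 0} - {p}) = card {j. j < l \<and> nA c j = 0} - 1"
    using pZ by (simp add: card_Diff_singleton)
  moreover have "card (PA c - {z}) = card (PA c) - 1" using z by (simp add: card_Diff_singleton)
  moreover have "card {j. j < l \<and> nA c j = 0} \<le> card (PA c)" using cardZ_le[OF W e0] .
  ultimately show "card ({j. j < l \<and> nA c j = 0} - {p}) \<le> card (PA c - {z})" by simp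
qed

end


context TG begin

lemma move_below:
  assumes W: "wfc l d k c" and e0: "ea c = 0" and s: "c 0 = IV p q" "p < l" "1 \<le> q" "q \<le> d p"
    and Ay: "A c p = {y}" and iy: "q < ix (c y)" and E: "ed d p (ix (c y) - 1) \<in> F"
  shows "\<exists>c'. good l d k fs F c c'"
proof -
  have yA: "y \<in> A c p" using Ay by simp
  define m where "m = ix (c y)"
  have m: "1 \<le> m" "m \<le> d p" "c y = IV p m" using ix_A[OF yA] unfolding m_def by auto
  have yIG: "y \<in> IG" using yA A_sub by blast
  have qm: "q < m" using iy unfolding m_def .
  define c' where "c' = c(y := IV p (m - 1))"
  have lm: "lmove k F c c'"
  proof (rule lmoveI)
    fix g assume "g \<le> k" "c' g \<noteq> c g"
    then have "g = y" unfolding c'_def by (cases "g = y") auto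
    have "{nd d p (Suc (m - 1)), nd d p (m - 1)} \<in> F" using E by (intro ed_up) (simp add: m_def)
    moreover have "Suc (m - 1) = m" using m by simp
    moreover have "1 \<le> m - 1" "m - 1 \<le> d p" using qm m s by linarith+
    then have "nd d p (m - 1) = IV p (m - 1)" by simp
    ultimately show "{c g, c' g} \<in> F" using \<open>g = y\<close> m unfolding c'_def by simp
  qed
  have c'0: "c' 0 = c 0" using yIG unfolding c'_def by auto
  show ?thesis
  proof (cases "m - 1 = q")
    case True
    have mt: "mt k c' = {y}" using mt_upd[OF W yIG] True s unfolding c'_def by simp
    have "tgt l d k c' (insert 0 {y})"
      by (rule tgt_inner_meet[OF W e0 yA s(2)]) (use c'0 s True m in \<open>auto simp: c'_def IV_path\<close>)
    then have "good l d k fs F c c'" using goodI2[OF lm] mt by simp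
    then show ?thesis by blast
  next
    case False
    have mt: "mt k c' = {}" using mt_upd[OF W yIG] False s unfolding c'_def by simp
    have "1 \<le> m - 1" "m - 1 \<le> d p" using qm m s by linarith+
    then have in2: "inner p (IV p (m - 1))" by simp
    have Aeq: "A c' j = A c j" for j unfolding c'_def using A_upd_same[OF yA in2] by simp
    have e': "ea c' = 0" using e0 Aeq unfolding ea_def nA_def by simp
    have st: "st c = 1" using st1[OF e0 s(1)] .
    have Dy: "Dy c' = Dy c"
      unfolding Dy_def using c'0 Aeq Ay s qm m False by (simp add: c'_def)
    have Fl: "Fl c' = Fl c"
      unfolding Fl_def using c'0 Aeq Ay s qm m False by (simp add: c'_def)
    have C1: "Cc c' = (if q < m - 1 then m - 1 - q else 0)"
      unfolding Cc_def using c'0 Aeq[of p] Ay s by (simp add: c'_def)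
    have C2: "Cc c = m - q" unfolding Cc_def using Ay s m qm by simp
    have Cc: "Cc c' < Cc c" using C1 C2 qm by (simp split: if_splits)
    have NA: "NA c' = NA c" using m unfolding c'_def NA_upd by (auto simp: NA_def)
    have GG: "GG c' = GG c"
      using GG_upd[OF yIG c'_def c'0] s m by simp
    have "(c', c) \<in> measures fs" using dec1[OF st e'] c'0 s Dy Fl Cc NA GG by simp
    then show ?thesis using goodI1[OF lm mt] by blast
  qed
qed


lemma nd_in': "1 \<le> m \<Longrightarrow> m \<le> d j \<Longrightarrow> nd d j m = IV j m" by simp

lemma stageB_U:
  assumes W: "wfc l d k c" and F: "validF l d F" and e0: "ea c = 0"
    and s: "c 0 = IV p q" "p < l" "1 \<le> q" "q \<le> d p" and E: "ed d p (q - 1) \<in> F"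
  shows "\<exists>c'. good l d k fs F c c'"
proof -
  have st: "st c = 1" using st1[OF e0 s(1)] .
  have dp: "1 \<le> d p" using dpos s by blast
  have E': "{nd d p q, nd d p (q - 1)} \<in> F" using ed_up[OF E] s by simp
  have ndq: "nd d p q = IV p q" using s by simp
  show ?thesis
  proof (cases "2 \<le> q")
    case True
    have q1: "1 \<le> q - 1" "q - 1 \<le> d p" using True s by linarith+
    define c' where "c' = c(0 := IV p (q - 1))"
    have lm: "lmove k F c c'"
    proof (rule lmoveI)
      fix g assume "g \<le> k" "c' g \<noteq> c g"
      then have "g = 0" unfolding c'_def by (cases "g = 0") auto
      then show "{c g, c' g} \<in> F" using E' ndq q1 s unfolding c'_def by simp
    qed
    have mt: "mt k c' = {g \<in> IG. c g = IV p (q - 1)}" unfolding c'_def mt_upd0 ..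
    show ?thesis
    proof (cases "mt k c' = {}")
      case False
      then obtain y where y: "y \<in> IG" "c y = IV p (q - 1)" using mt by blast
      then have yA: "y \<in> A c p" using q1 unfolding A_def by simp
      then have Ay: "A c p = {y}" using A_le1[OF e0 s(2)] by auto
      have mty: "mt k c' = {y}"
      proof -
        have "g = y" if "g \<in> IG" "c g = IV p (q - 1)" for g
        proof -
          have "g \<in> A c p" using that q1 unfolding A_def by simp
          then show ?thesis using Ay by simp
        qed
        then show ?thesis using mt y by blast
      qed
      have "tgt l d k c' (insert 0 {y})"
        by (rule tgt_inner_meet[OF W e0 yA s(2)]) (use q1 y in \<open>auto simp: c'_def IV_path\<close>)
      then have "good l d k fs F c c'" using goodI2[OF lm] mty by simp
      then show ?thesis by blast
    next
      case True
      have e': "ea c' = 0" using e0 unfolding c'_def ea_def nA_def A_upd_0 .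
      have "(c', c) \<in> measures fs" using dec1[OF st e'] s q1 True by (simp add: c'_def)
      then show ?thesis using goodI1[OF lm True] by blast
    qed
  next
    case False
    then have q: "q = 1" using s by simp
    have ndp1: "nd d p 1 = IV p 1" using dp by simp
    show ?thesis
    proof (cases "NA c = {}")
      case True
      define c' where "c' = c(0 := NP)"
      have lm: "lmove k F c c'"
      proof (rule lmoveI)
        fix g assume "g \<le> k" "c' g \<noteq> c g"
        then have "g = 0" unfolding c'_def by (cases "g = 0") auto
        then show "{c g, c' g} \<in> F" using E' q s unfolding c'_def by simp
      qed
      have mt: "mt k c' = {}" using True unfolding c'_def mt_upd0 NA_def by simp
      have e': "ea c' = 0" using e0 unfolding c'_def ea_def nA_def A_upd_0 .
      have "st c' = 0" using e' unfolding st_def c'_def by simp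
      then have "(c', c) \<in> measures fs" using st unfolding in_fs by simp
      then show ?thesis using goodI1[OF lm mt] by blast
    next
      case NAne: False
      show ?thesis
      proof (cases "card (NA c) \<le> k - l + 1")
        case True
        define c' where "c' = c(0 := NP)"
        have lm: "lmove k F c c'"
        proof (rule lmoveI)
          fix g assume "g \<le> k" "c' g \<noteq> c g"
          then have "g = 0" unfolding c'_def by (cases "g = 0") auto
          then show "{c g, c' g} \<in> F" using E' q s unfolding c'_def by simp
        qed
        have mt: "mt k c' = NA c" unfolding c'_def mt_upd0 NA_def ..
        obtain y where y: "y \<in> NA c" using NAne by blast
        let ?Z = "{j. j < l \<and> nA c j = 0}"
        obtain i where i: "i < l" "?Z \<noteq> {} \<Longrightarrow> i \<in> ?Z"
        proof (cases "?Z = {}")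
          case True then show ?thesis using that[of 0] l1 by simp
        next
          case False then obtain i where "i \<in> ?Z" by blast
          then show ?thesis using that[of i] by simp
        qed
        have cnt: "card (?Z - {i}) \<le> card (PA c - NA c)"
        proof -
          have PS: "PA c - NA c = SA c" unfolding PA_def NA_def SA_def by auto
          have "card (PA c) = card (NA c) + card (SA c)"
            using PA_NA_SA NA_SA_disj by (simp add: card_Un_disjoint)
          moreover have "card (PA c) + l = k + card ?Z" using count0[OF W e0] .
          moreover have "card (?Z - {i}) \<le> card ?Z - 1"
          proof (cases "?Z = {}")
            case True
            have "card (?Z - {i}) = 0" by (simp only: True) simp
            then show ?thesis by linarith
          next
            case False then show ?thesis using i(2) by (simp add: card_Diff_singleton)
          qed
          moreover have "card (PA c - NA c) = card (SA c)" using PS by simp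
          ultimately show ?thesis using True kl by linarith
        qed
        have "tgt l d k c' (insert 0 (NA c))"
        proof (rule tgt_count[OF W _ y i(1)])
          show "NA c \<subseteq> IG" unfolding NA_def by auto
          show "c' 0 \<in> path_nodes d i" unfolding c'_def by simp
          show "c' y \<in> path_nodes d i" using y unfolding c'_def NA_def by auto
          show "\<And>g. g \<in> IG \<Longrightarrow> g \<notin> NA c \<Longrightarrow> c' g = c g" unfolding c'_def by auto
          show "\<And>j. j < l \<Longrightarrow> j \<noteq> i \<Longrightarrow> A c j \<inter> NA c = {}" unfolding A_def NA_def by auto
          show "card (?Z - {i}) \<le> card (PA c - NA c)" by (rule cnt)
        qed
        then have "good l d k fs F c c'" using goodI2[OF lm] mt NAne by simp
        then show ?thesis by blast
      next
        case False
        show ?thesis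
        proof (cases "A c p = {}")
          case True
          obtain z where z: "z \<in> NA c" using NAne by blast
          have zIG: "z \<in> IG" and cz: "c z = NP" using z unfolding NA_def by auto
          define c' where "c' = c(z := IV p 1)"
          have lm: "lmove k F c c'"
          proof (rule lmoveI)
            fix g assume "g \<le> k" "c' g \<noteq> c g"
            then have "g = z" unfolding c'_def by (cases "g = z") auto
            have "{nd d p 0, nd d p (Suc 0)} \<in> F" using E q by (intro ed_dn) simp
            then show "{c g, c' g} \<in> F" using \<open>g = z\<close> cz dp unfolding c'_def by simp
          qed
          have mt: "mt k c' = {z}" using mt_upd[OF W zIG] s q unfolding c'_def by simp
          have "tgt l d k c' (insert 0 {z})"
          proof (rule tgt_pole_meet[OF W e0 _ s(2) True])
            show "z \<in> PA c" using z unfolding NA_def PA_def by auto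
            show "c' 0 \<in> path_nodes d p" "c' z \<in> path_nodes d p"
              using zIG s q dp unfolding c'_def by (auto simp: IV_path)
            show "\<And>g. g \<in> IG \<Longrightarrow> g \<noteq> z \<Longrightarrow> c' g = c g" unfolding c'_def by auto
          qed
          then have "good l d k fs F c c'" using goodI2[OF lm] mt by simp
          then show ?thesis by blast
        next
          case Ane: False
          then obtain y where Ay: "A c p = {y}" using A_le1[OF e0 s(2)] by blast
          have yA: "y \<in> A c p" using Ay by simp
          have yIG: "y \<in> IG" using yA A_sub by blast
          have iy: "1 \<le> ix (c y)" "ix (c y) \<le> d p" "c y = IV p (ix (c y))" using ix_A[OF yA] by auto
          have "c y \<noteq> c 0" using wfc_ne[OF W yIG] .
          then have qy: "q < ix (c y)" using iy s q by (cases "ix (c y) = 1") auto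
          show ?thesis
          proof (cases "ed d p (ix (c y) - 1) \<in> F")
            case True
            show ?thesis by (rule move_below[OF W e0 s Ay qy True])
          next
            case notF: False
            obtain r where r: "r < l" "\<And>m. m \<le> d r \<Longrightarrow> ed d r m \<in> F" using intact'[OF F] by blast
            have rp: "r \<noteq> p" using notF r(2)[of "ix (c y) - 1"] iy by auto
            have NN: "A c r = {} \<Longrightarrow> NA c \<noteq> {}" using NAne by blast
            show ?thesis by (rule settle_guard[OF W e0 s r(1) rp r(2) NN])
          qed
        qed
      qed
    qed
  qed
qed

end


context TG begin

lemma stageB_B:
  assumes W: "wfc l d k c" and F: "validF l d F" and e0: "ea c = 0"
    and s: "c 0 = IV p q" "p < l" "1 \<le> q" "q \<le> d p" and E: "ed d p (q - 1) \<notin> F"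
  shows "\<exists>c'. good l d k fs F c c'"
proof -
  have st: "st c = 1" using st1[OF e0 s(1)] .
  have dp: "1 \<le> d p" using dpos s by blast
  have oth: "ed d p m \<in> F" if "m \<le> d p" "m \<noteq> q - 1" for m
  proof (rule ccontr)
    assume "ed d p m \<notin> F"
    moreover have "q - 1 \<le> d p" using s by simp
    ultimately have "m = q - 1" using one_cut'[OF F s(2) that(1) _ _ E] by blast
    then show False using that(2) by simp
  qed
  obtain r where r: "r < l" "\<And>m. m \<le> d r \<Longrightarrow> ed d r m \<in> F" using intact'[OF F] by blast
  have rp: "r \<noteq> p" using E r(2)[of "q - 1"] s by auto
  show ?thesis
  proof (cases "A c p = {}")
    case False
    then obtain y where Ay: "A c p = {y}" using A_le1[OF e0 s(2)] by blast
    have yA: "y \<in> A c p" using Ay by simp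
    have yIG: "y \<in> IG" using yA A_sub by blast
    define m where "m = ix (c y)"
    have m: "1 \<le> m" "m \<le> d p" "c y = IV p m" using ix_A[OF yA] unfolding m_def by auto
    have "c y \<noteq> c 0" using wfc_ne[OF W yIG] .
    then have mq: "m \<noteq> q" using m s by auto
    show ?thesis
    proof (cases "q < m")
      case True
      have "m - 1 \<le> d p" "m - 1 \<noteq> q - 1" using True m s by linarith+
      then have "ed d p (ix (c y) - 1) \<in> F" using oth[of "m - 1"] unfolding m_def by blast
      then show ?thesis using move_below[OF W e0 s Ay] True unfolding m_def by blast
    next
      case False
      then have mq': "m < q" using mq by simp
      show ?thesis
      proof (cases "card (NA c) \<le> k - l")
        case True
        define c' where "c' = c(y := nd d p (m - 1))"
        have "m - 1 \<le> d p" "m - 1 \<noteq> q - 1" using mq' m s by linarith+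
        then have Em: "ed d p (m - 1) \<in> F" using oth[of "m - 1"] by blast
        have lm: "lmove k F c c'"
        proof (rule lmoveI)
          fix g assume "g \<le> k" "c' g \<noteq> c g"
          then have "g = y" unfolding c'_def by (cases "g = y") auto
          have "{nd d p (Suc (m - 1)), nd d p (m - 1)} \<in> F" using Em by (rule ed_up)
          moreover have "Suc (m - 1) = m" using m by simp
          ultimately show "{c g, c' g} \<in> F" using \<open>g = y\<close> m unfolding c'_def by simp
        qed
        have c'0: "c' 0 = c 0" using yIG unfolding c'_def by auto
        have newv: "nd d p (m - 1) \<noteq> c 0" using s mq' m by (auto simp: nd_def)
        have mt: "mt k c' = {}" using mt_upd[OF W yIG] newv unfolding c'_def by simp
        have Aj: "A c' j = A c j" if "j \<noteq> p" for j
          using that m unfolding c'_def A_upd by (auto simp: A_def nd_def)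
        have Apsub: "A c' p \<subseteq> A c p" using m unfolding c'_def A_upd by (auto simp: A_def)
        have e': "ea c' = 0"
        proof -
          have "nA c' j \<le> 1" if "j < l" for j
          proof (cases "j = p")
            case True
            have "nA c' p \<le> nA c p" unfolding nA_def by (rule card_mono[OF _ Apsub]) simp
            then show ?thesis using True e0 that ea_zero by fastforce
          next
            case False
            then show ?thesis using Aj[OF False] e0 that ea_zero unfolding nA_def by metis
          qed
          then show ?thesis using ea_zero by blast
        qed
        have Dyc: "Dy c = m" unfolding Dy_def using Ay s m mq' by simp
        have "Dy c' < m"
        proof (cases "m = 1")
          case True
          then have "A c' p = {}" using Ay yIG unfolding c'_def A_upd by auto
          then show ?thesis unfolding Dy_def using c'0 s m by simp
        next
          case False
          then have m1: "1 \<le> m - 1" "m - 1 \<le> d p" using m by linarith+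
          then have cy': "c' y = IV p (m - 1)" unfolding c'_def by simp
          have Ap': "A c' p = {y}" using Ay yIG m1 unfolding c'_def A_upd by auto
          have "Dy c' = (\<Sum>a\<in>A c' p. if ix (c' a) < q then ix (c' a) else 0)" unfolding Dy_def using c'0 s by simp
          then have "Dy c' = (if ix (c' y) < q then ix (c' y) else 0)" using Ap' by simp
          then have "Dy c' = m - 1" using cy' mq' by simp
          then show ?thesis using m1 by simp
        qed
        then have "(c', c) \<in> measures fs" using dec1[OF st e'] c'0 s Dyc by simp
        then show ?thesis using goodI1[OF lm mt] by blast
      next
        case False
        have NN: "A c r = {} \<Longrightarrow> NA c \<noteq> {}" using False by auto
        show ?thesis by (rule settle_guard[OF W e0 s r(1) rp r(2) NN])
      qed
    qed
  next
    case Ap: True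
    show ?thesis
    proof (cases "SA c = {}")
      case False
      then obtain x where x: "x \<in> SA c" by blast
      have xIG: "x \<in> IG" and cx: "c x = SP" using x unfolding SA_def by auto
      define c' where "c' = c(x := IV p (d p))"
      have lm: "lmove k F c c'"
      proof (rule lmoveI)
        fix g assume "g \<le> k" "c' g \<noteq> c g"
        then have "g = x" unfolding c'_def by (cases "g = x") auto
        have "d p \<noteq> q - 1" using s by linarith
        then have "ed d p (d p) \<in> F" using oth[of "d p"] by blast
        then have "{nd d p (Suc (d p)), nd d p (d p)} \<in> F" by (rule ed_up)
        then show "{c g, c' g} \<in> F" using \<open>g = x\<close> cx dp unfolding c'_def by simp
      qed
      have c'0: "c' 0 = c 0" using xIG unfolding c'_def by auto
      show ?thesis
      proof (cases "q = d p")
        case True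
        have mt: "mt k c' = {x}" using mt_upd[OF W xIG] s True unfolding c'_def by simp
        have "tgt l d k c' (insert 0 {x})"
        proof (rule tgt_pole_meet[OF W e0 _ s(2) Ap])
          show "x \<in> PA c" using x unfolding SA_def PA_def by auto
          show "c' 0 \<in> path_nodes d p" "c' x \<in> path_nodes d p"
            using xIG s dp unfolding c'_def by (auto simp: IV_path)
          show "\<And>g. g \<in> IG \<Longrightarrow> g \<noteq> x \<Longrightarrow> c' g = c g" unfolding c'_def by auto
        qed
        then have "good l d k fs F c c'" using goodI2[OF lm] mt by simp
        then show ?thesis by blast
      next
        case False
        have mt: "mt k c' = {}" using mt_upd[OF W xIG] s False unfolding c'_def by simp
        have Apx: "A c' p = {x}" using Ap xIG dp unfolding c'_def A_upd by auto
        have Aj: "A c' j = A c j" if "j \<noteq> p" for j using that cx unfolding c'_def A_upd by (auto simp: A_def)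
        have e': "ea c' = 0"
        proof -
          have "nA c' j \<le> 1" if "j < l" for j
          proof (cases "j = p")
            case True then show ?thesis using Apx unfolding nA_def by simp
          next
            case False then show ?thesis using Aj[OF False] e0 that ea_zero unfolding nA_def by metis
          qed
          then show ?thesis using ea_zero by blast
        qed
        have qd: "q < d p" using False s by simp
        have Dy: "Dy c' = Dy c" unfolding Dy_def using Apx Ap c'0 s qd by (simp add: c'_def)
        have Fl: "Fl c' < Fl c" unfolding Fl_def using Apx Ap c'0 s qd by (simp add: c'_def)
        have NAe: "NA c' = NA c" using cx unfolding c'_def NA_upd by (auto simp: NA_def)
        have GG: "GG c' = GG c" using GG_upd[OF xIG c'_def c'0] s cx by simp
        have "(c', c) \<in> measures fs" using dec1[OF st e'] c'0 s Dy Fl NAe GG by simp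
        then show ?thesis using goodI1[OF lm mt] by blast
      qed
    next
      case True
      have pZ: "p \<in> {j. j < l \<and> nA c j = 0}" using Ap s unfolding nA_def by simp
      then have "1 \<le> card {j. j < l \<and> nA c j = 0}"
        by (metis One_nat_def Suc_leI card_gt_0_iff empty_iff finite_Collect_conjI finite_lessThan lessThan_def)
      then have "1 \<le> card (PA c)" using cardZ_le[OF W e0] by linarith
      then have NN0: "NA c \<noteq> {}" using True PA_NA_SA by (metis card.empty not_one_le_zero sup_bot.right_neutral)
      have NN: "A c r = {} \<Longrightarrow> NA c \<noteq> {}" using NN0 by blast
      show ?thesis by (rule settle_guard[OF W e0 s r(1) rp r(2) NN])
    qed
  qed
qed

lemma stageB:
  assumes W: "wfc l d k c" and F: "validF l d F" and e0: "ea c = 0" and n: "c 0 \<noteq> NP" "c 0 \<noteq> SP"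
  shows "\<exists>c'. good l d k fs F c c'"
proof -
  obtain p q where s: "c 0 = IV p q" "p < l" "1 \<le> q" "q \<le> d p" using s_inner[OF W n] by blast
  show ?thesis
  proof (cases "ed d p (q - 1) \<in> F")
    case True then show ?thesis using stageB_U[OF W F e0 s] by blast
  next
    case False then show ?thesis using stageB_B[OF W F e0 s] by blast
  qed
qed

end


context TG begin

lemma A_IG: "a \<in> A c j \<Longrightarrow> a \<in> IG" unfolding A_def by auto
lemma A_nz: "a \<in> A c j \<Longrightarrow> a \<noteq> 0" unfolding A_def by auto

lemma tp_bt_eq:
  assumes "A c' j = A c j" "\<And>a. a \<in> A c j \<Longrightarrow> c' a = c a"
  shows "tp c' j = tp c j" "bt c' j = bt c j" "nA c' j = nA c j" "hh c' j = hh c j"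
proof -
  have "(\<lambda>a. ix (c' a)) ` A c' j = (\<lambda>a. ix (c a)) ` A c j" using assms by auto
  then show "tp c' j = tp c j" "bt c' j = bt c j" unfolding tp_def bt_def by simp_all
  show "nA c' j = nA c j" unfolding nA_def using assms by simp
  then show "hh c' j = hh c j" unfolding hh_def using \<open>tp c' j = tp c j\<close> \<open>bt c' j = bt c j\<close> by simp
qed

lemma HH_less:
  assumes "j < l" "\<And>x. x < l \<Longrightarrow> x \<noteq> j \<Longrightarrow> hh c' x = hh c x" "hh c' j < hh c j"
  shows "HH c' < HH c"
  using sum_one_change[of j "hh c'" "hh c", OF assms(1,2)] assms(3) unfolding HH_def by simp

lemma ea_less:
  assumes "j < l" "\<And>x. x < l \<Longrightarrow> x \<noteq> j \<Longrightarrow> nA c' x = nA c x" "1 \<le> nA c' j" "nA c' j < nA c j"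
  shows "ea c' < ea c"
proof -
  have "(\<Sum>x<l. nA c' x - 1) + (nA c j - 1) = (\<Sum>x<l. nA c x - 1) + (nA c' j - 1)"
    by (rule sum_one_change[OF assms(1)]) (simp add: assms(2))
  then show ?thesis unfolding ea_def using assms(3,4) by linarith
qed

lemma crowded_ne: "2 \<le> nA c j \<Longrightarrow> A c j \<noteq> {}"
  unfolding nA_def by auto

lemma tp_le_bt: "A c j \<noteq> {} \<Longrightarrow> tp c j \<le> bt c j"
  using tp_ex bt_ge tp_le by (metis le_trans)

lemma tp_range: "A c j \<noteq> {} \<Longrightarrow> 1 \<le> tp c j \<and> bt c j \<le> d j"
  using tp_ex bt_ex ix_A by metis

lemma two_elems: "2 \<le> nA c j \<Longrightarrow> a \<in> A c j \<Longrightarrow> \<exists>b\<in>A c j. b \<noteq> a"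
  unfolding nA_def by (metis card_1_singletonE card_le_Suc0_iff_eq A_fin le_SucE not_less_eq_eq numeral_2_eq_2 singletonI)

lemma A1_up:
  assumes W: "wfc l d k c" and e: "0 < ea c" and j: "j < l" and cr: "2 \<le> nA c j"
    and E: "ed d j (tp c j - 1) \<in> F"
    and ok: "tp c j < bt c j \<or> nd d j (tp c j - 1) \<noteq> c 0"
  shows "\<exists>c'. good l d k fs F c c'"
proof -
  let ?T = "tp c j" and ?B = "bt c j"
  have ne: "A c j \<noteq> {}" using crowded_ne[OF cr] .
  have TB: "1 \<le> ?T" "?T \<le> ?B" "?B \<le> d j" using tp_range[OF ne] tp_le_bt[OF ne] by auto
  define u where "u = nd d j (?T - 1)"
  have ndT: "nd d j ?T = IV j ?T" using TB by simp
  have Eu: "{IV j ?T, u} \<in> F" "{u, IV j ?T} \<in> F"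
    using ed_up[OF E] ed_dn[OF E] TB ndT unfolding u_def by auto
  obtain a0 where a0: "a0 \<in> A c j" "ix (c a0) = ?T" using tp_ex[OF ne] by blast
  have cA: "c a = IV j (ix (c a))" if "a \<in> A c j" for a using ix_A[OF that] by simp
  define M where "M = (if ?T < ?B then {a \<in> A c j. ix (c a) = ?T} else {a0})"
  have Msub: "M \<subseteq> A c j" using a0 unfolding M_def by auto
  have Mne: "a0 \<in> M" using a0 unfolding M_def by auto
  have MT: "c a = IV j ?T" if "a \<in> M" for a
  proof -
    have "a \<in> A c j \<and> ix (c a) = ?T" using that a0 unfolding M_def by (auto split: if_splits)
    then show ?thesis using cA by metis
  qed
  have sw: "c 0 = u \<Longrightarrow> ?T < ?B" using ok unfolding u_def by auto
  define c' where "c' = (\<lambda>g. if g \<in> M then u else if g = 0 \<and> c 0 = u then IV j ?T else c g)"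
  have M0: "0 \<notin> M"
  proof
    assume "0 \<in> M"
    then have "0 \<in> A c j" using Msub by blast
    then show False using A_sub[of c j] by auto
  qed
  have lm: "lmove k F c c'"
  proof (rule lmoveI)
    fix g assume g: "g \<le> k" "c' g \<noteq> c g"
    show "{c g, c' g} \<in> F"
    proof (cases "g \<in> M")
      case True then show ?thesis using MT Eu unfolding c'_def by simp
    next
      case False
      then have "g = 0 \<and> c 0 = u" using g unfolding c'_def by (auto split: if_splits)
      then show ?thesis using Eu False unfolding c'_def by simp
    qed
  qed
  have c'0: "c' 0 = (if c 0 = u then IV j ?T else c 0)" using M0 unfolding c'_def by simp
  have uT: "u \<noteq> IV j ?T" unfolding u_def using TB by (auto simp: nd_def)
  have mt: "mt k c' = {}"
  proof (rule mt_empty)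
    fix g assume g: "g \<in> IG"
    show "c' g \<noteq> c' 0"
    proof (cases "g \<in> M")
      case True
      then show ?thesis using c'0 uT wfc_ne[OF W g] MT[OF True] unfolding c'_def by (auto split: if_splits)
    next
      case False
      have cg: "c' g = c g" using False g unfolding c'_def by auto
      show ?thesis
      proof (cases "c 0 = u")
        case True
        have "c g \<noteq> IV j ?T"
        proof
          assume h: "c g = IV j ?T"
          then have gA: "g \<in> A c j" using g TB unfolding A_def by simp
          have "?T < ?B" using sw True by simp
          then have "g \<in> M" using gA h unfolding M_def by simp
          then show False using False by simp
        qed
        then show ?thesis using cg c'0 True by simp
      next
        case False
        then show ?thesis using cg c'0 wfc_ne[OF W g] by simp
      qed
    qed
  qed
  have Aoth: "A c' x = A c x" if "x \<noteq> j" for x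
  proof -
    have "u \<in> path_nodes d j" unfolding u_def by (rule nd_path) (use TB in simp)
    then have nu: "\<not> inner x u" using not_inner_other that by blast
    show ?thesis unfolding A_def c'_def using Msub nu that
      by (auto simp: A_def dest: inner_uniq)
  qed
  have poth: "c' a = c a" if "a \<in> A c x" "x \<noteq> j" for a x
  proof -
    have "a \<notin> M" using that Msub A_disj by blast
    moreover have "a \<noteq> 0" using that(1) by (rule A_nz)
    ultimately show ?thesis unfolding c'_def by simp
  qed
  have oth: "nA c' x = nA c x" "hh c' x = hh c x" if "x \<noteq> j" for x
    using tp_bt_eq[OF Aoth[OF that] poth[OF _ that]] by auto
  show ?thesis
  proof (cases "?T = 1")
    case True
    then have uN: "u = NP" unfolding u_def by simp
    have Aj: "A c' j = A c j - M"
      unfolding A_def c'_def using uN Msub by (auto simp: A_def)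
    have "A c j - M \<subset> A c j" using Msub Mne by blast
    then have "nA c' j < nA c j" unfolding nA_def Aj by (rule psubset_card_mono[OF A_fin])
    moreover have "1 \<le> nA c' j"
    proof -
      obtain b where b: "b \<in> A c j" "b \<notin> M"
      proof (cases "?T < ?B")
        case True
        obtain b where "b \<in> A c j" "ix (c b) = ?B" using bt_ex[OF ne] by blast
        then show ?thesis using that True unfolding M_def by auto
      next
        case False
        obtain b where "b \<in> A c j" "b \<noteq> a0" using two_elems[OF cr a0(1)] by blast
        then show ?thesis using that False unfolding M_def by auto
      qed
      then have "b \<in> A c' j" using Aj by simp
      then show ?thesis unfolding nA_def using card_0_eq[of "A c' j"] by fastforce
    qed
    ultimately have "ea c' < ea c" using ea_less[OF j] oth by blast
    then have "(c', c) \<in> measures fs" using dec3[OF e] by blast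
    then show ?thesis using goodI1[OF lm mt] by blast
  next
    case False
    then have T2: "2 \<le> ?T" using TB by simp
    have uI: "u = IV j (?T - 1)" unfolding u_def using T2 TB by simp
    have Aj: "A c' j = A c j"
      unfolding A_def c'_def using uI Msub T2 TB by (auto simp: A_def)
    have pos': "c' a = (if a \<in> M then IV j (?T - 1) else c a)" if "a \<in> A c j" for a
      using A_nz[OF that] uI unfolding c'_def by auto
    have tp': "tp c' j = ?T - 1"
    proof (rule tpI)
      show "a0 \<in> A c' j" using Aj a0 by simp
      show "ix (c' a0) = ?T - 1" using pos'[OF a0(1)] Mne by simp
      fix b assume "b \<in> A c' j"
      then have b: "b \<in> A c j" using Aj by simp
      show "?T - 1 \<le> ix (c' b)" using pos'[OF b] tp_le[OF b] by auto
    qed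
    have bt': "bt c' j = ?B"
    proof -
      obtain b where b: "b \<in> A c j" "b \<notin> M" "ix (c b) = ?B"
      proof (cases "?T < ?B")
        case True
        obtain b where "b \<in> A c j" "ix (c b) = ?B" using bt_ex[OF ne] by blast
        then show ?thesis using that True unfolding M_def by auto
      next
        case False
        then have TBe: "?T = ?B" using TB by simp
        obtain b where "b \<in> A c j" "b \<noteq> a0" using two_elems[OF cr a0(1)] by blast
        moreover have "ix (c b) = ?B" using calculation tp_le bt_ge TBe by (metis le_antisym)
        ultimately show ?thesis using that False unfolding M_def by auto
      qed
      show ?thesis
      proof (rule btI)
        show "b \<in> A c' j" using Aj b by simp
        show "ix (c' b) = ?B" using pos'[OF b(1)] b by simp
        fix x assume "x \<in> A c' j"
        then have x: "x \<in> A c j" using Aj by simp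
        show "ix (c' x) \<le> ?B" using pos'[OF x] bt_ge[OF x] TB by auto
      qed
    qed
    have nAj: "nA c' j = nA c j" unfolding nA_def using Aj by simp
    have "hh c' j < hh c j" unfolding hh_def using tp' bt' nAj cr T2 TB by simp
    then have HHl: "HH c' < HH c" using HH_less[OF j] oth by blast
    have nall: "nA c' x = nA c x" for x using nAj oth(1)[of x] by (cases "x = j") auto
    have "ea c' = ea c" by (rule ea_eq) (rule nall)
    then have "(c', c) \<in> measures fs" using dec3[OF e] HHl by simp
    then show ?thesis using goodI1[OF lm mt] by blast
  qed
qed

end


context TG begin

lemma A1_dn:
  assumes W: "wfc l d k c" and e: "0 < ea c" and j: "j < l" and cr: "2 \<le> nA c j"
    and E: "ed d j (bt c j) \<in> F"
    and ok: "tp c j < bt c j \<or> nd d j (Suc (bt c j)) \<noteq> c 0"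
  shows "\<exists>c'. good l d k fs F c c'"
proof -
  let ?T = "tp c j" and ?B = "bt c j"
  have ne: "A c j \<noteq> {}" using crowded_ne[OF cr] .
  have TB: "1 \<le> ?T" "?T \<le> ?B" "?B \<le> d j" using tp_range[OF ne] tp_le_bt[OF ne] by auto
  define u where "u = nd d j (Suc ?B)"
  have ndB: "nd d j ?B = IV j ?B" using TB by simp
  have Eu: "{IV j ?B, u} \<in> F" "{u, IV j ?B} \<in> F"
    using ed_dn[OF E] ed_up[OF E] TB ndB unfolding u_def by auto
  obtain a0 where a0: "a0 \<in> A c j" "ix (c a0) = ?B" using bt_ex[OF ne] by blast
  have cA: "c a = IV j (ix (c a))" if "a \<in> A c j" for a using ix_A[OF that] by simp
  define M where "M = (if ?T < ?B then {a \<in> A c j. ix (c a) = ?B} else {a0})"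
  have Msub: "M \<subseteq> A c j" using a0 unfolding M_def by auto
  have Mne: "a0 \<in> M" using a0 unfolding M_def by auto
  have MT: "c a = IV j ?B" if "a \<in> M" for a
  proof -
    have "a \<in> A c j \<and> ix (c a) = ?B" using that a0 unfolding M_def by (auto split: if_splits)
    then show ?thesis using cA by metis
  qed
  have sw: "c 0 = u \<Longrightarrow> ?T < ?B" using ok unfolding u_def by auto
  define c' where "c' = (\<lambda>g. if g \<in> M then u else if g = 0 \<and> c 0 = u then IV j ?B else c g)"
  have M0: "0 \<notin> M"
  proof
    assume "0 \<in> M"
    then have "0 \<in> A c j" using Msub by blast
    then show False using A_nz by blast
  qed
  have lm: "lmove k F c c'"
  proof (rule lmoveI)
    fix g assume g: "g \<le> k" "c' g \<noteq> c g"
    show "{c g, c' g} \<in> F"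
    proof (cases "g \<in> M")
      case True then show ?thesis using MT Eu unfolding c'_def by simp
    next
      case False
      then have "g = 0 \<and> c 0 = u" using g unfolding c'_def by (auto split: if_splits)
      then show ?thesis using Eu False unfolding c'_def by simp
    qed
  qed
  have c'0: "c' 0 = (if c 0 = u then IV j ?B else c 0)" using M0 unfolding c'_def by simp
  have uT: "u \<noteq> IV j ?B" unfolding u_def using TB by (auto simp: nd_def)
  have mt: "mt k c' = {}"
  proof (rule mt_empty)
    fix g assume g: "g \<in> IG"
    show "c' g \<noteq> c' 0"
    proof (cases "g \<in> M")
      case True
      then show ?thesis using c'0 uT wfc_ne[OF W g] MT[OF True] unfolding c'_def by (auto split: if_splits)
    next
      case False
      have cg: "c' g = c g" using False g unfolding c'_def by auto
      show ?thesis
      proof (cases "c 0 = u")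
        case True
        have "c g \<noteq> IV j ?B"
        proof
          assume h: "c g = IV j ?B"
          then have gA: "g \<in> A c j" using g TB unfolding A_def by simp
          have "?T < ?B" using sw True by simp
          then have "g \<in> M" using gA h unfolding M_def by simp
          then show False using False by simp
        qed
        then show ?thesis using cg c'0 True by simp
      next
        case False
        then show ?thesis using cg c'0 wfc_ne[OF W g] by simp
      qed
    qed
  qed
  have Aoth: "A c' x = A c x" if "x \<noteq> j" for x
  proof -
    have "u \<in> path_nodes d j" unfolding u_def by (rule nd_path) (use TB in simp)
    then have nu: "\<not> inner x u" using not_inner_other that by blast
    show ?thesis unfolding A_def c'_def using Msub nu that
      by (auto simp: A_def dest: inner_uniq)
  qed
  have poth: "c' a = c a" if "a \<in> A c x" "x \<noteq> j" for a x
  proof -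
    have "a \<notin> M" using that Msub A_disj by blast
    moreover have "a \<noteq> 0" using that(1) by (rule A_nz)
    ultimately show ?thesis unfolding c'_def by simp
  qed
  have oth: "nA c' x = nA c x" "hh c' x = hh c x" if "x \<noteq> j" for x
    using tp_bt_eq[OF Aoth[OF that] poth[OF _ that]] by auto
  show ?thesis
  proof (cases "?B = d j")
    case True
    then have uS: "u = SP" unfolding u_def by simp
    have Aj: "A c' j = A c j - M"
      unfolding A_def c'_def using uS Msub by (auto simp: A_def)
    have "A c j - M \<subset> A c j" using Msub Mne by blast
    then have "nA c' j < nA c j" unfolding nA_def Aj by (rule psubset_card_mono[OF A_fin])
    moreover have "1 \<le> nA c' j"
    proof -
      obtain b where b: "b \<in> A c j" "b \<notin> M"
      proof (cases "?T < ?B")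
        case True
        obtain b where "b \<in> A c j" "ix (c b) = ?T" using tp_ex[OF ne] by blast
        then show ?thesis using that True unfolding M_def by auto
      next
        case False
        obtain b where "b \<in> A c j" "b \<noteq> a0" using two_elems[OF cr a0(1)] by blast
        then show ?thesis using that False unfolding M_def by auto
      qed
      then have "b \<in> A c' j" using Aj by simp
      then show ?thesis unfolding nA_def using card_0_eq[of "A c' j"] by fastforce
    qed
    ultimately have "ea c' < ea c" using ea_less[OF j] oth by blast
    then have "(c', c) \<in> measures fs" using dec3[OF e] by blast
    then show ?thesis using goodI1[OF lm mt] by blast
  next
    case False
    then have B2: "Suc ?B \<le> d j" using TB by simp
    have uI: "u = IV j (Suc ?B)" unfolding u_def using B2 by simp
    have Aj: "A c' j = A c j"
      unfolding A_def c'_def using uI Msub B2 by (auto simp: A_def)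
    have pos': "c' a = (if a \<in> M then IV j (Suc ?B) else c a)" if "a \<in> A c j" for a
      using A_nz[OF that] uI unfolding c'_def by auto
    have bt': "bt c' j = Suc ?B"
    proof (rule btI)
      show "a0 \<in> A c' j" using Aj a0 by simp
      show "ix (c' a0) = Suc ?B" using pos'[OF a0(1)] Mne by simp
      fix b assume "b \<in> A c' j"
      then have b: "b \<in> A c j" using Aj by simp
      show "ix (c' b) \<le> Suc ?B" using pos'[OF b] bt_ge[OF b] by auto
    qed
    have tp': "tp c' j = ?T"
    proof -
      obtain b where b: "b \<in> A c j" "b \<notin> M" "ix (c b) = ?T"
      proof (cases "?T < ?B")
        case True
        obtain b where "b \<in> A c j" "ix (c b) = ?T" using tp_ex[OF ne] by blast
        then show ?thesis using that True unfolding M_def by auto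
      next
        case False
        then have TBe: "?T = ?B" using TB by simp
        obtain b where "b \<in> A c j" "b \<noteq> a0" using two_elems[OF cr a0(1)] by blast
        moreover have "ix (c b) = ?T" using calculation tp_le bt_ge TBe by (metis le_antisym)
        ultimately show ?thesis using that False unfolding M_def by auto
      qed
      show ?thesis
      proof (rule tpI)
        show "b \<in> A c' j" using Aj b by simp
        show "ix (c' b) = ?T" using pos'[OF b(1)] b by simp
        fix x assume "x \<in> A c' j"
        then have x: "x \<in> A c j" using Aj by simp
        show "?T \<le> ix (c' x)" using pos'[OF x] tp_le[OF x] TB by auto
      qed
    qed
    have nAj: "nA c' j = nA c j" unfolding nA_def using Aj by simp
    have "hh c' j < hh c j" unfolding hh_def using tp' bt' nAj cr B2 TB by simp
    then have HHl: "HH c' < HH c" using HH_less[OF j] oth by blast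
    have nall: "nA c' x = nA c x" for x using nAj oth(1)[of x] by (cases "x = j") auto
    have "ea c' = ea c" by (rule ea_eq) (rule nall)
    then have "(c', c) \<in> measures fs" using dec3[OF e] HHl by simp
    then show ?thesis using goodI1[OF lm mt] by blast
  qed
qed

end


context TG begin

lemma sg_le3: "sg c \<le> 3"
  unfolding sg_def Let_def by auto

lemma sg_pole: "c 0 = NP \<or> c 0 = SP \<Longrightarrow> sg c \<le> 1"
  unfolding sg_def by auto

lemma sg_int: "c 0 = IV p q \<Longrightarrow> sg c = (if 2 \<le> nA c p \<and> tp c p = bt c p \<and> (tp c p = Suc q \<or> Suc (tp c p) = q) then
         (let w = 2 * q - tp c p in
            if w = 0 \<or> w = Suc (d p) then (if \<exists>a\<in>IG. c a = nd d p w then 3 else 2) else 1)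
       else 0)"
  unfolding sg_def by simp

lemma ea_pos: "0 < ea c \<Longrightarrow> \<exists>j<l. 2 \<le> nA c j"
proof (rule ccontr)
  assume "0 < ea c" "\<not> (\<exists>j<l. 2 \<le> nA c j)"
  then have "\<forall>j<l. nA c j \<le> 1" by auto
  then have "ea c = 0" using ea_zero by blast
  then show False using \<open>0 < ea c\<close> by simp
qed

lemma ea_eq1:
  assumes "\<And>j. j < l \<Longrightarrow> nA c' j - 1 = nA c j - 1"
  shows "ea c' = ea c"
  unfolding ea_def using assms by simp

lemma stallN:
  assumes W: "wfc l d k c" and F: "validF l d F" and e: "0 < ea c" and s: "c 0 = NP"
    and stl: "\<And>j. j < l \<Longrightarrow> 2 \<le> nA c j \<Longrightarrow> tp c j = 1 \<and> bt c j = 1 \<and> ed d j 1 \<notin> F"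
  shows "\<exists>c'. good l d k fs F c c'"
proof -
  obtain j0 where j0: "j0 < l" "2 \<le> nA c j0" using ea_pos[OF e] by blast
  have sg1: "sg c = 1" using stl[OF j0] j0 s unfolding sg_def by auto
  obtain r where r: "r < l" "\<And>m. m \<le> d r \<Longrightarrow> ed d r m \<in> F" using intact'[OF F] by blast
  have dr: "1 \<le> d r" using dpos r by blast
  have nr: "nA c r \<le> 1"
  proof (rule ccontr)
    assume "\<not> nA c r \<le> 1"
    then have "ed d r 1 \<notin> F" using stl[OF r(1)] by simp
    then show False using r(2) dr by simp
  qed
  define M where "M = {g \<in> IG. c g = IV r 1}"
  define c' where "c' = (\<lambda>g. if g \<in> M then nd d r 2 else c g)(0 := IV r 1)"
  have nd1: "nd d r 1 = IV r 1" using dr by simp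
  have lm: "lmove k F c c'"
  proof (rule lmoveI)
    fix g assume g: "g \<le> k" "c' g \<noteq> c g"
    show "{c g, c' g} \<in> F"
    proof (cases "g = 0")
      case True
      have "{nd d r 0, nd d r (Suc 0)} \<in> F" using r(2)[of 0] by (intro ed_dn) simp
      then show ?thesis using True s nd1 unfolding c'_def by simp
    next
      case False
      then have "g \<in> M" using g unfolding c'_def by (cases "g \<in> M") auto
      have "{nd d r 1, nd d r (Suc 1)} \<in> F" using r(2)[of 1] dr by (intro ed_dn) simp
      then show ?thesis using \<open>g \<in> M\<close> False nd1 unfolding c'_def M_def by (simp add: numeral_2_eq_2)
    qed
  qed
  have nd2: "nd d r 2 \<noteq> IV r 1" by (auto simp: nd_def)
  have mt: "mt k c' = {}"
  proof (rule mt_empty)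
    fix g assume g: "g \<in> IG"
    show "c' g \<noteq> c' 0"
      using g nd2 unfolding c'_def M_def by auto
  qed
  have nd2p: "nd d r 2 \<in> path_nodes d r" by (rule nd_path) (use dr in simp)
  have Aoth: "A c' x = A c x" if "x \<noteq> r" for x
  proof -
    have "\<not> inner x (nd d r 2)" using not_inner_other[OF nd2p that] .
    moreover have "\<not> inner x (IV r 1)" using that by simp
    ultimately show ?thesis unfolding A_def c'_def M_def by auto
  qed
  have poth: "c' a = c a" if "a \<in> A c x" "x \<noteq> r" for a x
  proof -
    have "a \<notin> M" using that unfolding M_def A_def by auto
    then show ?thesis using A_nz[OF that(1)] unfolding c'_def by simp
  qed
  have Arsub: "A c' r \<subseteq> A c r"
  proof
    fix g assume g: "g \<in> A c' r"
    then have gI: "g \<in> IG" "inner r (c' g)" unfolding A_def by auto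
    show "g \<in> A c r"
    proof (cases "g \<in> M")
      case True then show ?thesis using gI dr unfolding M_def A_def by auto
    next
      case False then show ?thesis using gI unfolding c'_def A_def by auto
    qed
  qed
  have nr': "nA c' r \<le> 1" using card_mono[OF A_fin Arsub] nr unfolding nA_def by simp
  have eaq: "ea c' = ea c"
  proof (rule ea_eq1)
    fix x assume "x < l"
    show "nA c' x - 1 = nA c x - 1"
    proof (cases "x = r")
      case True then show ?thesis using nr nr' by simp
    next
      case False then show ?thesis using tp_bt_eq[OF Aoth[OF False] poth[OF _ False]] by simp
    qed
  qed
  have HHq: "HH c' = HH c"
    unfolding HH_def
  proof (rule sum.cong)
    fix x assume "x \<in> {..<l}"
    show "hh c' x = hh c x"
    proof (cases "x = r")
      case True then show ?thesis using nr nr' unfolding hh_def by simp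
    next
      case False then show ?thesis using tp_bt_eq[OF Aoth[OF False] poth[OF _ False]] by simp
    qed
  qed simp
  have "sg c' = 0" using sg_int[of c' r 1] nr' unfolding c'_def by simp
  then have "(c', c) \<in> measures fs" using dec3[OF e] eaq HHq sg1 by simp
  then show ?thesis using goodI1[OF lm mt] by blast
qed

lemma stallS:
  assumes W: "wfc l d k c" and F: "validF l d F" and e: "0 < ea c" and s: "c 0 = SP"
    and stl: "\<And>j. j < l \<Longrightarrow> 2 \<le> nA c j \<Longrightarrow> tp c j = d j \<and> bt c j = d j \<and> ed d j (d j - 1) \<notin> F"
  shows "\<exists>c'. good l d k fs F c c'"
proof -
  obtain j0 where j0: "j0 < l" "2 \<le> nA c j0" using ea_pos[OF e] by blast
  have sg1: "sg c = 1" using stl[OF j0] j0 s unfolding sg_def by auto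
  obtain r where r: "r < l" "\<And>m. m \<le> d r \<Longrightarrow> ed d r m \<in> F" using intact'[OF F] by blast
  have dr: "1 \<le> d r" using dpos r by blast
  have nr: "nA c r \<le> 1"
  proof (rule ccontr)
    assume "\<not> nA c r \<le> 1"
    then have "ed d r (d r - 1) \<notin> F" using stl[OF r(1)] by simp
    then show False using r(2)[of "d r - 1"] by simp
  qed
  define M where "M = {g \<in> IG. c g = IV r (d r)}"
  define c' where "c' = (\<lambda>g. if g \<in> M then nd d r (d r - 1) else c g)(0 := IV r (d r))"
  have nd1: "nd d r (d r) = IV r (d r)" using dr by simp
  have sd: "Suc (d r - 1) = d r" using dr by simp
  have lm: "lmove k F c c'"
  proof (rule lmoveI)
    fix g assume g: "g \<le> k" "c' g \<noteq> c g"
    show "{c g, c' g} \<in> F"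
    proof (cases "g = 0")
      case True
      have "{nd d r (Suc (d r)), nd d r (d r)} \<in> F" using r(2)[of "d r"] by (intro ed_up) simp
      then show ?thesis using True s nd1 unfolding c'_def by simp
    next
      case False
      then have "g \<in> M" using g unfolding c'_def by (cases "g \<in> M") auto
      have "{nd d r (Suc (d r - 1)), nd d r (d r - 1)} \<in> F" using r(2)[of "d r - 1"] by (intro ed_up) simp
      then show ?thesis using \<open>g \<in> M\<close> False nd1 sd unfolding c'_def M_def by simp
    qed
  qed
  have nd2: "nd d r (d r - 1) \<noteq> IV r (d r)" using dr by (auto simp: nd_def)
  have mt: "mt k c' = {}"
  proof (rule mt_empty)
    fix g assume g: "g \<in> IG"
    show "c' g \<noteq> c' 0"
      using g nd2 unfolding c'_def M_def by auto
  qed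
  have nd2p: "nd d r (d r - 1) \<in> path_nodes d r" by (rule nd_path) simp
  have Aoth: "A c' x = A c x" if "x \<noteq> r" for x
  proof -
    have "\<not> inner x (nd d r (d r - 1))" using not_inner_other[OF nd2p that] .
    moreover have "\<not> inner x (IV r (d r))" using that by simp
    ultimately show ?thesis unfolding A_def c'_def M_def by auto
  qed
  have poth: "c' a = c a" if "a \<in> A c x" "x \<noteq> r" for a x
  proof -
    have "a \<notin> M" using that unfolding M_def A_def by auto
    then show ?thesis using A_nz[OF that(1)] unfolding c'_def by simp
  qed
  have Arsub: "A c' r \<subseteq> A c r"
  proof
    fix g assume g: "g \<in> A c' r"
    then have gI: "g \<in> IG" "inner r (c' g)" unfolding A_def by auto
    show "g \<in> A c r"
    proof (cases "g \<in> M")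
      case True then show ?thesis using gI dr unfolding M_def A_def by auto
    next
      case False then show ?thesis using gI unfolding c'_def A_def by auto
    qed
  qed
  have nr': "nA c' r \<le> 1" using card_mono[OF A_fin Arsub] nr unfolding nA_def by simp
  have eaq: "ea c' = ea c"
  proof (rule ea_eq1)
    fix x assume "x < l"
    show "nA c' x - 1 = nA c x - 1"
    proof (cases "x = r")
      case True then show ?thesis using nr nr' by simp
    next
      case False then show ?thesis using tp_bt_eq[OF Aoth[OF False] poth[OF _ False]] by simp
    qed
  qed
  have HHq: "HH c' = HH c"
    unfolding HH_def
  proof (rule sum.cong)
    fix x assume "x \<in> {..<l}"
    show "hh c' x = hh c x"
    proof (cases "x = r")
      case True then show ?thesis using nr nr' unfolding hh_def by simp
    next
      case False then show ?thesis using tp_bt_eq[OF Aoth[OF False] poth[OF _ False]] by simp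
    qed
  qed simp
  have "sg c' = 0" using sg_int[of c' r "d r"] nr' unfolding c'_def by simp
  then have "(c', c) \<in> measures fs" using dec3[OF e] eaq HHq sg1 by simp
  then show ?thesis using goodI1[OF lm mt] by blast
qed

end


context TG begin

lemma PA_upd: "PA (c(g := v)) = (PA c - {g}) \<union> (if g \<in> IG \<and> (v = NP \<or> v = SP) then {g} else {})"
  unfolding PA_def by auto

lemma settle_pole:
  assumes W: "wfc l d k c" and e: "0 < ea c" and s: "c 0 = IV p q"
    and u: "u < l" "u \<noteq> p" "nA c u = 0" and z: "z \<in> PA c" and v: "v = IV u 1 \<or> v = IV u (d u)"
    and E: "{c z, v} \<in> F" and sg3: "sg c = 3"
  shows "\<exists>c'. good l d k fs F c c'"
proof -
  have du: "1 \<le> d u" using dpos u by blast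
  have zIG: "z \<in> IG" using z unfolding PA_def by auto
  have cz: "c z = NP \<or> c z = SP" using z unfolding PA_def by auto
  define c' where "c' = c(z := v)"
  have lm: "lmove k F c c'"
  proof (rule lmoveI)
    fix g assume "g \<le> k" "c' g \<noteq> c g"
    then have "g = z" unfolding c'_def by (cases "g = z") auto
    then show "{c g, c' g} \<in> F" using E unfolding c'_def by simp
  qed
  have vin: "inner u v" using v du by auto
  have c'0: "c' 0 = c 0" using zIG unfolding c'_def by auto
  have mt: "mt k c' = {}" using mt_upd[OF W zIG, of v] s vin u(2) unfolding c'_def by (auto simp: inner_def)
  have Au: "A c u = {}" using u unfolding nA_def by simp
  have Au': "A c' u = {z}" using Au zIG vin unfolding c'_def A_upd by auto
  have Aoth: "A c' x = A c x" if "x \<noteq> u" for x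
    using that cz vin inner_uniq unfolding c'_def A_upd by (auto simp: A_def)
  have poth: "c' a = c a" if "a \<in> A c x" for a x
  proof -
    have "a \<noteq> z" using that cz unfolding A_def by auto
    then show ?thesis unfolding c'_def by simp
  qed
  have eaq: "ea c' = ea c"
  proof (rule ea_eq1)
    fix x assume "x < l"
    show "nA c' x - 1 = nA c x - 1"
    proof (cases "x = u")
      case True then show ?thesis using Au Au' unfolding nA_def by simp
    next
      case False then show ?thesis using tp_bt_eq[OF Aoth[OF False] poth] by simp
    qed
  qed
  have HHq: "HH c' = HH c"
    unfolding HH_def
  proof (rule sum.cong)
    fix x assume "x \<in> {..<l}"
    show "hh c' x = hh c x"
    proof (cases "x = u")
      case True then show ?thesis using Au Au' unfolding hh_def nA_def by simp
    next
      case False then show ?thesis using tp_bt_eq[OF Aoth[OF False] poth] by simp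
    qed
  qed simp
  have "PA c' = PA c - {z}" using vin unfolding c'_def PA_upd by (auto simp: inner_def)
  then have "card (PA c') < card (PA c)" using z card_Diff1_less[OF PA_fin z] by simp
  moreover have "sg c' < sg c \<or> sg c' = sg c" using sg_le3[of c'] sg3 by linarith
  ultimately have "(c', c) \<in> measures fs"
    using dec3[OF e] eaq HHq by auto
  then show ?thesis using goodI1[OF lm mt] by blast
qed


lemma stall_f:
  assumes W: "wfc l d k c" and F: "validF l d F" and e: "0 < ea c"
    and s: "c 0 = IV p q" "p < l" "1 \<le> q" "q \<le> d p"
    and cl: "\<And>a. a \<in> A c p \<Longrightarrow> c a = IV p v" and ne: "A c p \<noteq> {}"
    and Eb: "{IV p v, IV p q} \<in> F" and NAne: "NA c \<noteq> {}" and SAne: "SA c \<noteq> {}" and sg3: "sg c = 3"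
  shows "\<exists>c'. good l d k fs F c c'"
proof (cases "\<exists>u<l. u \<noteq> p \<and> nA c u = 0")
  case True
  then obtain u where u: "u < l" "u \<noteq> p" "nA c u = 0" by blast
  have du: "1 \<le> d u" using dpos u by blast
  show ?thesis
  proof (cases "ed d u 0 \<in> F")
    case True
    obtain z where z: "z \<in> NA c" using NAne by blast
    have zP: "z \<in> PA c" and cz: "c z = NP" using z unfolding NA_def PA_def by auto
    have "{nd d u 0, nd d u (Suc 0)} \<in> F" using True by (rule ed_dn)
    then have "{c z, IV u 1} \<in> F" using cz du by simp
    then show ?thesis using settle_pole[OF W e s(1) u zP _ _ sg3] by blast
  next
    case False
    have "ed d u (d u) \<in> F"
    proof (rule ccontr)
      assume "ed d u (d u) \<notin> F"
      then have "0 = d u" using one_cut'[OF F u(1) _ _ False] by simp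
      then show False using du by simp
    qed
    obtain x where x: "x \<in> SA c" using SAne by blast
    have xP: "x \<in> PA c" and cx: "c x = SP" using x unfolding SA_def PA_def by auto
    have "{nd d u (Suc (d u)), nd d u (d u)} \<in> F" using \<open>ed d u (d u) \<in> F\<close> by (rule ed_up)
    then have "{c x, IV u (d u)} \<in> F" using cx du by simp
    then show ?thesis using settle_pole[OF W e s(1) u xP _ _ sg3] by blast
  qed
next
  case False
  obtain a0 where a0: "a0 \<in> A c p" using ne by blast
  have a0IG: "a0 \<in> IG" using a0 by (rule A_IG)
  define c' where "c' = c(a0 := IV p q)"
  have lm: "lmove k F c c'"
  proof (rule lmoveI)
    fix g assume "g \<le> k" "c' g \<noteq> c g"
    then have "g = a0" unfolding c'_def by (cases "g = a0") auto
    then show "{c g, c' g} \<in> F" using Eb cl[OF a0] unfolding c'_def by simp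
  qed
  have mt: "mt k c' = {a0}" using mt_upd[OF W a0IG] s unfolding c'_def by simp
  have "tgt l d k c' (insert 0 {a0})"
  proof (rule tgt_intro[of p 0 a0])
    show "p < l" using s by simp
    show "0 \<noteq> a0" using a0IG by auto
    show "0 \<in> insert 0 {a0}" "a0 \<in> insert 0 {a0}" by simp_all
    show "c' 0 \<in> path_nodes d p" "c' a0 \<in> path_nodes d p" using s a0IG unfolding c'_def by (auto simp: IV_path)
    show "0 \<notin> IG" by simp
    have "{j. j < l \<and> j \<noteq> p \<and> (\<forall>g\<in>IG - insert 0 {a0}. \<not> inner j (c' g))} = {}"
    proof (rule ccontr)
      assume "{j. j < l \<and> j \<noteq> p \<and> (\<forall>g\<in>IG - insert 0 {a0}. \<not> inner j (c' g))} \<noteq> {}"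
      then obtain j where j: "j < l" "j \<noteq> p" "\<forall>g\<in>IG - insert 0 {a0}. \<not> inner j (c' g)" by blast
      have "\<not> (j < l \<and> j \<noteq> p \<and> nA c j = 0)" using False by blast
      then have "nA c j \<noteq> 0" using j(1,2) by simp
      then obtain g where g: "g \<in> A c j" unfolding nA_def by (metis card.empty ex_in_conv)
      have "g \<noteq> a0" using g a0 A_disj j(2) by blast
      then have "g \<in> IG - insert 0 {a0}" "inner j (c' g)" using g A_nz[OF g] unfolding c'_def A_def by auto
      then show False using j(3) by blast
    qed
    then show "card {j. j < l \<and> j \<noteq> p \<and> (\<forall>g\<in>IG - insert 0 {a0}. \<not> inner j (c' g))}
      \<le> card {g \<in> IG - insert 0 {a0}. c' g = NP \<or> c' g = SP}" by (simp only: card.empty le0)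
  qed
  then have "good l d k fs F c c'" using goodI2[OF lm] mt by simp
  then show ?thesis by blast
qed

end


context TG begin

lemma HH_agents_eq: "(\<And>a. a \<in> IG \<Longrightarrow> c' a = c a) \<Longrightarrow> HH c' = HH c \<and> ea c' = ea c"
proof -
  assume h: "\<And>a. a \<in> IG \<Longrightarrow> c' a = c a"
  have Aeq: "A c' j = A c j" for j unfolding A_def using h by auto
  have "tp c' j = tp c j \<and> bt c' j = bt c j \<and> nA c' j = nA c j \<and> hh c' j = hh c j" for j
    using tp_bt_eq[OF Aeq, of j] h A_IG by blast
  then show ?thesis unfolding HH_def ea_def by simp
qed

lemma stallA:
  assumes W: "wfc l d k c" and F: "validF l d F" and e: "0 < ea c"
    and s: "c 0 = IV p q" "p < l" "1 \<le> q" "q \<le> d p"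
    and cr: "2 \<le> nA c p" and tb: "tp c p = v" "bt c p = v" and qv: "q = Suc v"
    and E1: "ed d p v \<in> F" and E2: "ed d p (v - 1) \<notin> F"
  shows "\<exists>c'. good l d k fs F c c'"
proof -
  have ne: "A c p \<noteq> {}" using crowded_ne[OF cr] .
  have v1: "1 \<le> v" using tp_range[OF ne] tb by simp
  have cl: "c a = IV p v" if "a \<in> A c p" for a
  proof -
    have "ix (c a) = v" using tp_le[OF that] bt_ge[OF that] tb by simp
    then show ?thesis using ix_A[OF that] by simp
  qed
  have oth: "ed d p m \<in> F" if "m \<le> d p" "m \<noteq> v - 1" for m
  proof (rule ccontr)
    assume "ed d p m \<notin> F"
    moreover have "v - 1 \<le> d p" using s qv by simp
    ultimately have "m = v - 1" using one_cut'[OF F s(2) that(1) _ _ E2] by blast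
    then show False using that(2) by simp
  qed
  have Eb: "{IV p v, IV p q} \<in> F" using ed_dn[OF E1] v1 s qv by simp
  have sgc: "sg c = (if q + 1 = Suc (d p) then (if \<exists>a\<in>IG. c a = SP then 3 else 2) else 1)"
  proof -
    have "2 * q - v = q + 1" using qv by simp
    then show ?thesis using sg_int[of c p q, OF s(1)] cr tb qv by (simp add: Let_def)
  qed
  have st3: "HH c' = HH c \<and> ea c' = ea c" if "\<And>a. a \<in> IG \<Longrightarrow> c' a = c a" for c'
    using HH_agents_eq that by blast
  show ?thesis
  proof (cases "q < d p")
    case True
    define c' where "c' = c(0 := IV p (Suc q))"
    have lm: "lmove k F c c'"
    proof (rule lmoveI)
      fix g assume "g \<le> k" "c' g \<noteq> c g"
      then have "g = 0" unfolding c'_def by (cases "g = 0") auto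
      have "ed d p q \<in> F" using oth[of q] s qv by simp
      then have "{nd d p q, nd d p (Suc q)} \<in> F" by (rule ed_dn)
      then show "{c g, c' g} \<in> F" using \<open>g = 0\<close> s True unfolding c'_def by simp
    qed
    have mt: "mt k c' = {}"
    proof -
      have "c g \<noteq> IV p (Suc q)" if "g \<in> IG" for g
      proof
        assume "c g = IV p (Suc q)"
        then have "g \<in> A c p" using that True unfolding A_def by simp
        then show False using cl \<open>c g = IV p (Suc q)\<close> qv by simp
      qed
      then show ?thesis unfolding c'_def mt_upd0 by auto
    qed
    have eq: "HH c' = HH c \<and> ea c' = ea c" by (rule st3) (simp add: c'_def)
    have "A c' p = A c p" unfolding c'_def A_upd_0 ..
    then have tb': "tp c' p = v" "bt c' p = v" "nA c' p = nA c p"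
      using tp_bt_eq[of c' p c] tb by (auto simp: c'_def A_nz)
    have "sg c' = 0" using sg_int[of c' p "Suc q"] tb' qv unfolding c'_def by simp
    moreover have "sg c = 1" using sgc True by simp
    ultimately have "(c', c) \<in> measures fs" using dec3[OF e] eq by simp
    then show ?thesis using goodI1[OF lm mt] by blast
  next
    case False
    then have qd: "q = d p" using s by simp
    have Eq: "ed d p q \<in> F" using oth[of q] s qv by simp
    have EqS: "{IV p q, SP} \<in> F" using ed_dn[OF Eq] s qd by simp
    show ?thesis
    proof (cases "SA c = {}")
      case True
      define c' where "c' = c(0 := SP)"
      have lm: "lmove k F c c'"
      proof (rule lmoveI)
        fix g assume "g \<le> k" "c' g \<noteq> c g"
        then have "g = 0" unfolding c'_def by (cases "g = 0") auto
        then show "{c g, c' g} \<in> F" using EqS s unfolding c'_def by simp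
      qed
      have mt: "mt k c' = {}" using True unfolding c'_def mt_upd0 SA_def by simp
      have eq: "HH c' = HH c \<and> ea c' = ea c" by (rule st3) (simp add: c'_def)
      have "sg c' \<le> 1" using sg_pole[of c'] unfolding c'_def by simp
      moreover have "sg c = 2" using sgc qd True unfolding SA_def by auto
      ultimately have "(c', c) \<in> measures fs" using dec3[OF e] eq by simp
      then show ?thesis using goodI1[OF lm mt] by blast
    next
      case SAne: False
      have sg3: "sg c = 3" using sgc qd SAne unfolding SA_def by auto
      show ?thesis
      proof (cases "3 \<le> d p \<or> NA c = {}")
        case True
        define c' where "c' = (\<lambda>g. if g \<in> A c p then IV p q else c g)(0 := IV p v)"
        have lm: "lmove k F c c'"
        proof (rule lmoveI)
          fix g assume g: "g \<le> k" "c' g \<noteq> c g"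
          show "{c g, c' g} \<in> F"
          proof (cases "g = 0")
            case True then show ?thesis using Eb s unfolding c'_def by (simp add: insert_commute)
          next
            case False
            then have "g \<in> A c p" using g unfolding c'_def by (cases "g \<in> A c p") auto
            then show ?thesis using Eb cl False unfolding c'_def by simp
          qed
        qed
        have mt: "mt k c' = {}"
        proof (rule mt_empty)
          fix g assume g: "g \<in> IG"
          show "c' g \<noteq> c' 0"
          proof (cases "g \<in> A c p")
            case True then show ?thesis using qv g unfolding c'_def by auto
          next
            case False
            have "c g \<noteq> IV p v" using False g v1 s qv unfolding A_def by auto
            then show ?thesis using False g unfolding c'_def by auto
          qed
        qed
        have Aeq: "A c' x = A c x" for x
          unfolding c'_def A_def using s qv by (auto simp: A_def dest: inner_uniq)
        have pos: "c' a = (if a \<in> A c p then IV p q else c a)" if "a \<in> IG" for a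
          using that unfolding c'_def by auto
        have oth': "tp c' x = tp c x \<and> bt c' x = bt c x \<and> nA c' x = nA c x \<and> hh c' x = hh c x" if "x \<noteq> p" for x
        proof -
          have "c' a = c a" if "a \<in> A c x" for a using that pos[OF A_IG[OF that]] A_disj \<open>x \<noteq> p\<close> by auto
          then show ?thesis using tp_bt_eq[OF Aeq] by blast
        qed
        obtain a0 where a0: "a0 \<in> A c p" using ne by blast
        have tpq: "tp c' p = q" "bt c' p = q"
        proof -
          show "tp c' p = q" by (rule tpI[of a0]) (use a0 Aeq pos A_IG in auto)
          show "bt c' p = q" by (rule btI[of a0]) (use a0 Aeq pos A_IG in auto)
        qed
        have nAp: "nA c' p = nA c p" unfolding nA_def Aeq ..
        have hhp: "hh c' p = hh c p" unfolding hh_def using tpq tb nAp cr s qv by simp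
        have eaq: "ea c' = ea c" by (rule ea_eq) (metis nAp oth')
        have hall: "hh c' x = hh c x" for x using hhp oth'[of x] by (cases "x = p") auto
        have HHq: "HH c' = HH c" unfolding HH_def using hall by simp
        have "sg c' < 3"
        proof -
          have w': "2 * v - q = v - 1" using qv by simp
          have sgc': "sg c' = (if v - 1 = 0 \<or> v - 1 = Suc (d p) then (if \<exists>a\<in>IG. c' a = nd d p (v - 1) then 3 else 2) else 1)"
            using sg_int[of c' p v] tpq nAp cr qv w' unfolding c'_def by (simp add: Let_def)
          show ?thesis
          proof (cases "3 \<le> d p")
            case True
            then have "v - 1 \<noteq> 0" using qd qv by simp
            moreover have "v - 1 \<noteq> Suc (d p)" using qd qv by simp
            ultimately show ?thesis using sgc' by simp
          next
            case False
            then have NA0: "NA c = {}" using \<open>3 \<le> d p \<or> NA c = {}\<close> by simp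
            have "\<not> (\<exists>a\<in>IG. c' a = nd d p (v - 1))"
            proof
              assume "\<exists>a\<in>IG. c' a = nd d p (v - 1)"
              then obtain a where a: "a \<in> IG" "c' a = nd d p (v - 1)" by blast
              have "v - 1 = 0" using False qd qv v1 by simp
              then have "c' a = NP" using a by simp
              then show False using a pos[OF a(1)] NA0 unfolding NA_def by (auto split: if_splits)
            qed
            then show ?thesis using sgc' by auto
          qed
        qed
        then have "(c', c) \<in> measures fs" using dec3[OF e] eaq HHq sg3 by simp
        then show ?thesis using goodI1[OF lm mt] by blast
      next
        case False
        then have NAne: "NA c \<noteq> {}" by simp
        show ?thesis by (rule stall_f[OF W F e s cl ne Eb NAne SAne sg3])
      qed
    qed
  qed
qed

end


context TG begin

lemma stallB:
  assumes W: "wfc l d k c" and F: "validF l d F" and e: "0 < ea c"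
    and s: "c 0 = IV p q" "p < l" "1 \<le> q" "q \<le> d p"
    and cr: "2 \<le> nA c p" and tb: "tp c p = v" "bt c p = v" and qv: "v = Suc q"
    and E1: "ed d p q \<in> F" and E2: "ed d p v \<notin> F"
  shows "\<exists>c'. good l d k fs F c c'"
proof -
  have ne: "A c p \<noteq> {}" using crowded_ne[OF cr] .
  have vd: "v \<le> d p" using tp_range[OF ne] tb by simp
  have cl: "c a = IV p v" if "a \<in> A c p" for a
  proof -
    have "ix (c a) = v" using tp_le[OF that] bt_ge[OF that] tb by simp
    then show ?thesis using ix_A[OF that] by simp
  qed
  have oth: "ed d p m \<in> F" if "m \<le> d p" "m \<noteq> v" for m
  proof (rule ccontr)
    assume "ed d p m \<notin> F"
    then have "m = v" using one_cut'[OF F s(2) that(1) vd _ E2] by blast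
    then show False using that(2) by simp
  qed
  have Eb: "{IV p v, IV p q} \<in> F" using ed_up[OF E1] vd s qv by simp
  have sgc: "sg c = (if q - 1 = 0 then (if \<exists>a\<in>IG. c a = NP then 3 else 2) else 1)"
  proof -
    have w: "2 * q - v = q - 1" using qv by simp
    have ns: "q - 1 \<noteq> Suc (d p)" using s by simp
    have sg0: "sg c = (if q - 1 = 0 then (if \<exists>a\<in>IG. c a = nd d p (q - 1) then 3 else 2) else 1)"
      using sg_int[of c p q, OF s(1)] cr tb qv w ns by (simp add: Let_def)
    show ?thesis
    proof (cases "q - 1 = 0")
      case True then show ?thesis using sg0 by simp
    next
      case False then show ?thesis using sg0 by simp
    qed
  qed
  have st3: "HH c' = HH c \<and> ea c' = ea c" if "\<And>a. a \<in> IG \<Longrightarrow> c' a = c a" for c'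
    using HH_agents_eq that by blast
  show ?thesis
  proof (cases "2 \<le> q")
    case True
    define c' where "c' = c(0 := IV p (q - 1))"
    have q1: "1 \<le> q - 1" "q - 1 \<le> d p" using True s by linarith+
    have lm: "lmove k F c c'"
    proof (rule lmoveI)
      fix g assume "g \<le> k" "c' g \<noteq> c g"
      then have "g = 0" unfolding c'_def by (cases "g = 0") auto
      have "ed d p (q - 1) \<in> F" using oth[of "q - 1"] s qv by simp
      then have "{nd d p (Suc (q - 1)), nd d p (q - 1)} \<in> F" by (rule ed_up)
      moreover have "Suc (q - 1) = q" using s by simp
      ultimately show "{c g, c' g} \<in> F" using \<open>g = 0\<close> s q1 unfolding c'_def by simp
    qed
    have mt: "mt k c' = {}"
    proof -
      have "c g \<noteq> IV p (q - 1)" if "g \<in> IG" for g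
      proof
        assume "c g = IV p (q - 1)"
        then have "g \<in> A c p" using that q1 unfolding A_def by simp
        then show False using cl \<open>c g = IV p (q - 1)\<close> qv by simp
      qed
      then show ?thesis unfolding c'_def mt_upd0 by auto
    qed
    have eq: "HH c' = HH c \<and> ea c' = ea c" by (rule st3) (simp add: c'_def)
    have "A c' p = A c p" unfolding c'_def A_upd_0 ..
    then have tb': "tp c' p = v" "bt c' p = v" "nA c' p = nA c p"
      using tp_bt_eq[of c' p c] tb by (auto simp: c'_def A_nz)
    have nadj: "\<not> (Suc q = Suc (q - 1) \<or> Suc (Suc q) = q - 1)" using s by simp
    have "sg c' = 0" using sg_int[of c' p "q - 1"] tb' qv nadj unfolding c'_def by simp
    moreover have "sg c = 1" using sgc True by simp
    ultimately have "(c', c) \<in> measures fs" using dec3[OF e] eq by simp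
    then show ?thesis using goodI1[OF lm mt] by blast
  next
    case False
    then have q1: "q = 1" using s by simp
    have Eq: "ed d p 0 \<in> F" using oth[of 0] qv by simp
    have EqN: "{IV p q, NP} \<in> F" using ed_up[OF Eq] s q1 by simp
    show ?thesis
    proof (cases "NA c = {}")
      case True
      define c' where "c' = c(0 := NP)"
      have lm: "lmove k F c c'"
      proof (rule lmoveI)
        fix g assume "g \<le> k" "c' g \<noteq> c g"
        then have "g = 0" unfolding c'_def by (cases "g = 0") auto
        then show "{c g, c' g} \<in> F" using EqN s unfolding c'_def by simp
      qed
      have mt: "mt k c' = {}" using True unfolding c'_def mt_upd0 NA_def by simp
      have eq: "HH c' = HH c \<and> ea c' = ea c" by (rule st3) (simp add: c'_def)
      have "sg c' \<le> 1" using sg_pole[of c'] unfolding c'_def by simp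
      moreover have "sg c = 2" using sgc q1 True unfolding NA_def by auto
      ultimately have "(c', c) \<in> measures fs" using dec3[OF e] eq by simp
      then show ?thesis using goodI1[OF lm mt] by blast
    next
      case NAne: False
      have sg3: "sg c = 3" using sgc q1 NAne unfolding NA_def by auto
      show ?thesis
      proof (cases "3 \<le> d p \<or> SA c = {}")
        case True
        define c' where "c' = (\<lambda>g. if g \<in> A c p then IV p q else c g)(0 := IV p v)"
        have lm: "lmove k F c c'"
        proof (rule lmoveI)
          fix g assume g: "g \<le> k" "c' g \<noteq> c g"
          show "{c g, c' g} \<in> F"
          proof (cases "g = 0")
            case True then show ?thesis using Eb s unfolding c'_def by (simp add: insert_commute)
          next
            case False
            then have "g \<in> A c p" using g unfolding c'_def by (cases "g \<in> A c p") auto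
            then show ?thesis using Eb cl False unfolding c'_def by simp
          qed
        qed
        have mt: "mt k c' = {}"
        proof (rule mt_empty)
          fix g assume g: "g \<in> IG"
          show "c' g \<noteq> c' 0"
          proof (cases "g \<in> A c p")
            case True then show ?thesis using qv g unfolding c'_def by auto
          next
            case False
            have "c g \<noteq> IV p v" using False g vd qv unfolding A_def by auto
            then show ?thesis using False g unfolding c'_def by auto
          qed
        qed
        have Aeq: "A c' x = A c x" for x
          unfolding c'_def A_def using s qv by (auto simp: A_def dest: inner_uniq)
        have pos: "c' a = (if a \<in> A c p then IV p q else c a)" if "a \<in> IG" for a
          using that unfolding c'_def by auto
        have oth': "tp c' x = tp c x \<and> bt c' x = bt c x \<and> nA c' x = nA c x \<and> hh c' x = hh c x" if "x \<noteq> p" for x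
        proof -
          have "c' a = c a" if "a \<in> A c x" for a using that pos[OF A_IG[OF that]] A_disj \<open>x \<noteq> p\<close> by auto
          then show ?thesis using tp_bt_eq[OF Aeq] by blast
        qed
        obtain a0 where a0: "a0 \<in> A c p" using ne by blast
        have tpq: "tp c' p = q" "bt c' p = q"
        proof -
          show "tp c' p = q" by (rule tpI[of a0]) (use a0 Aeq pos A_IG in auto)
          show "bt c' p = q" by (rule btI[of a0]) (use a0 Aeq pos A_IG in auto)
        qed
        have nAp: "nA c' p = nA c p" unfolding nA_def Aeq ..
        have hhp: "hh c' p = hh c p" unfolding hh_def using tpq tb nAp cr s qv vd by simp
        have eaq: "ea c' = ea c" by (rule ea_eq) (metis nAp oth')
        have hall: "hh c' x = hh c x" for x using hhp oth'[of x] by (cases "x = p") auto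
        have HHq: "HH c' = HH c" unfolding HH_def using hall by simp
        have "sg c' < 3"
        proof -
          have w': "2 * v - q = 3" using qv q1 by simp
          have sgc': "sg c' = (if (3::nat) = 0 \<or> 3 = Suc (d p) then (if \<exists>a\<in>IG. c' a = nd d p 3 then 3 else 2) else 1)"
            using sg_int[of c' p v] tpq nAp cr qv q1 w' unfolding c'_def by (simp add: Let_def)
          show ?thesis
          proof (cases "3 \<le> d p")
            case True
            then show ?thesis using sgc' by simp
          next
            case False
            then have SA0: "SA c = {}" using \<open>3 \<le> d p \<or> SA c = {}\<close> by simp
            have dp2: "d p = 2" using False vd qv q1 by simp
            have "\<not> (\<exists>a\<in>IG. c' a = nd d p 3)"
            proof
              assume "\<exists>a\<in>IG. c' a = nd d p 3"
              then obtain a where a: "a \<in> IG" "c' a = nd d p 3" by blast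
              then have "c' a = SP" using dp2 by (simp add: nd_def)
              then show False using a pos[OF a(1)] SA0 unfolding SA_def by (auto split: if_splits)
            qed
            then show ?thesis using sgc' by auto
          qed
        qed
        then have "(c', c) \<in> measures fs" using dec3[OF e] eaq HHq sg3 by simp
        then show ?thesis using goodI1[OF lm mt] by blast
      next
        case False
        then have SAne: "SA c \<noteq> {}" by simp
        show ?thesis by (rule stall_f[OF W F e s cl ne Eb NAne SAne sg3])
      qed
    qed
  qed
qed

end


context TG begin

lemma nd_inj: "m1 \<le> Suc (d j) \<Longrightarrow> m2 \<le> Suc (d j) \<Longrightarrow> nd d j m1 = nd d j m2 \<Longrightarrow> m1 = m2"
  by (auto simp: nd_def split: if_splits)

lemma stall_facts:
  assumes F: "validF l d F" and j: "j < l" and cr: "2 \<le> nA c j"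
    and nup: "\<not> (ed d j (tp c j - 1) \<in> F \<and> (tp c j < bt c j \<or> nd d j (tp c j - 1) \<noteq> c 0))"
    and ndn: "\<not> (ed d j (bt c j) \<in> F \<and> (tp c j < bt c j \<or> nd d j (Suc (bt c j)) \<noteq> c 0))"
  shows "tp c j = bt c j \<and> ((nd d j (tp c j - 1) = c 0 \<and> ed d j (tp c j - 1) \<in> F \<and> ed d j (tp c j) \<notin> F)
     \<or> (nd d j (Suc (tp c j)) = c 0 \<and> ed d j (tp c j) \<in> F \<and> ed d j (tp c j - 1) \<notin> F))"
proof -
  let ?T = "tp c j" and ?B = "bt c j"
  have ne: "A c j \<noteq> {}" using crowded_ne[OF cr] .
  have TB: "1 \<le> ?T" "?T \<le> ?B" "?B \<le> d j" using tp_range[OF ne] tp_le_bt[OF ne] by auto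
  show ?thesis
  proof (cases "ed d j (?T - 1) \<in> F")
    case True
    then have T1: "?T = ?B" "nd d j (?T - 1) = c 0" using nup TB by auto
    have "ed d j ?B \<notin> F"
    proof
      assume "ed d j ?B \<in> F"
      then have "nd d j (Suc ?B) = c 0" using ndn T1 by auto
      then have "nd d j (?T - 1) = nd d j (Suc ?B)" using T1 by simp
      then have "?T - 1 = Suc ?B" using nd_inj[of "?T - 1" j "Suc ?B"] TB by simp
      then show False using TB by simp
    qed
    then show ?thesis using T1 True by simp
  next
    case False
    have "ed d j ?B \<in> F"
    proof (rule ccontr)
      assume "ed d j ?B \<notin> F"
      then have "?T - 1 = ?B" using one_cut'[OF F j _ TB(3) False] TB by simp
      then show False using TB by simp
    qed
    then have "?T = ?B" "nd d j (Suc ?B) = c 0" using ndn TB by auto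
    then show ?thesis using False \<open>ed d j ?B \<in> F\<close> by simp
  qed
qed

lemma stageA:
  assumes W: "wfc l d k c" and F: "validF l d F" and e: "0 < ea c"
  shows "\<exists>c'. good l d k fs F c c'"
proof (cases "\<exists>j<l. 2 \<le> nA c j \<and> ed d j (tp c j - 1) \<in> F \<and> (tp c j < bt c j \<or> nd d j (tp c j - 1) \<noteq> c 0)")
  case True
  then obtain j where "j < l" "2 \<le> nA c j" "ed d j (tp c j - 1) \<in> F" "tp c j < bt c j \<or> nd d j (tp c j - 1) \<noteq> c 0"
    by blast
  then show ?thesis using A1_up[OF W e] by blast
next
  case nup: False
  show ?thesis
  proof (cases "\<exists>j<l. 2 \<le> nA c j \<and> ed d j (bt c j) \<in> F \<and> (tp c j < bt c j \<or> nd d j (Suc (bt c j)) \<noteq> c 0)")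
    case True
    then obtain j where "j < l" "2 \<le> nA c j" "ed d j (bt c j) \<in> F" "tp c j < bt c j \<or> nd d j (Suc (bt c j)) \<noteq> c 0"
      by blast
    then show ?thesis using A1_dn[OF W e] by blast
  next
    case ndn: False
    have SF: "tp c j = bt c j \<and> ((nd d j (tp c j - 1) = c 0 \<and> ed d j (tp c j - 1) \<in> F \<and> ed d j (tp c j) \<notin> F)
     \<or> (nd d j (Suc (tp c j)) = c 0 \<and> ed d j (tp c j) \<in> F \<and> ed d j (tp c j - 1) \<notin> F))"
      if "j < l" "2 \<le> nA c j" for j
      using stall_facts[OF F that] nup ndn that by blast
    have rng: "1 \<le> tp c j \<and> tp c j \<le> d j" if "j < l" "2 \<le> nA c j" for j
      using tp_range[OF crowded_ne[OF that(2)]] tp_le_bt[OF crowded_ne[OF that(2)]] by auto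
    obtain j0 where j0: "j0 < l" "2 \<le> nA c j0" using ea_pos[OF e] by blast
    show ?thesis
    proof (cases "c 0 = NP")
      case True
      have "tp c j = 1 \<and> bt c j = 1 \<and> ed d j 1 \<notin> F" if "j < l" "2 \<le> nA c j" for j
      proof -
        have h: "Suc (tp c j) \<le> Suc (d j)" "tp c j - 1 \<le> Suc (d j)" using rng[OF that] by auto
        have "nd d j (Suc (tp c j)) \<noteq> NP" by (simp add: nd_def)
        then have "nd d j (tp c j - 1) = NP \<and> ed d j (tp c j) \<notin> F" using SF[OF that] True by auto
        then have "tp c j - 1 = 0" using nd_NP_iff[of "tp c j - 1" d j, OF h(2)] by simp
        then have "tp c j = 1" using rng[OF that] by simp
        then show ?thesis using SF[OF that] \<open>nd d j (tp c j - 1) = NP \<and> ed d j (tp c j) \<notin> F\<close> by simp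
      qed
      then show ?thesis using stallN[OF W F e True] by blast
    next
      case notN: False
      show ?thesis
      proof (cases "c 0 = SP")
        case True
        have "tp c j = d j \<and> bt c j = d j \<and> ed d j (d j - 1) \<notin> F" if "j < l" "2 \<le> nA c j" for j
        proof -
          have h: "tp c j - 1 \<le> Suc (d j)" "Suc (tp c j) \<le> Suc (d j)" using rng[OF that] by auto
          have "nd d j (tp c j - 1) \<noteq> SP" using nd_SP_iff[of "tp c j - 1" d j, OF h(1)] rng[OF that] by auto
          then have h2: "nd d j (Suc (tp c j)) = SP \<and> ed d j (tp c j - 1) \<notin> F" using SF[OF that] True by auto
          then have "Suc (tp c j) = Suc (d j)" using nd_SP_iff[of "Suc (tp c j)" d j, OF h(2)] by simp
          then show ?thesis using SF[OF that] h2 by simp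
        qed
        then show ?thesis using stallS[OF W F e True] by blast
      next
        case notS: False
        obtain p q where s: "c 0 = IV p q" "p < l" "1 \<le> q" "q \<le> d p" using s_inner[OF W notN notS] by blast
        let ?v = "tp c j0"
        have h: "?v - 1 \<le> Suc (d j0)" "Suc ?v \<le> Suc (d j0)" using rng[OF j0] by auto
        from SF[OF j0] show ?thesis
        proof (elim conjE disjE)
          assume tb: "tp c j0 = bt c j0" and a: "nd d j0 (?v - 1) = c 0" "ed d j0 (?v - 1) \<in> F" "ed d j0 ?v \<notin> F"
          have "j0 = p \<and> q = ?v - 1" using a(1) s nd_IV_iff[of "?v - 1" d j0 p q, OF h(1)] by auto
          then have jp: "j0 = p" and qv: "?v = Suc q" using s by auto
          show ?thesis
            by (rule stallB[OF W F e s _ _ _ qv]) (use j0 jp tb a qv in auto)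
        next
          assume tb: "tp c j0 = bt c j0" and a: "nd d j0 (Suc ?v) = c 0" "ed d j0 ?v \<in> F" "ed d j0 (?v - 1) \<notin> F"
          have "j0 = p \<and> q = Suc ?v" using a(1) s nd_IV_iff[of "Suc ?v" d j0 p q, OF h(2)] by auto
          then have jp: "j0 = p" and qv: "q = Suc ?v" by auto
          show ?thesis
            by (rule stallA[OF W F e s _ _ _ qv]) (use j0 jp tb a in auto)
        qed
      qed
    qed
  qed
qed

lemma exist:
  assumes W: "wfc l d k c" and F: "validF l d F"
  shows "\<exists>c'. good l d k fs F c c'"
proof (cases "0 < ea c")
  case True then show ?thesis using stageA[OF W F] by blast
next
  case False
  then have e0: "ea c = 0" by simp
  show ?thesis
  proof (cases "c 0 = NP")
    case True then show ?thesis using stageC[OF W F e0] by blast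
  next
    case False
    show ?thesis
    proof (cases "c 0 = SP")
      case True then show ?thesis using stageS[OF W F e0] by blast
    next
      case notS: False
      show ?thesis using stageB[OF W F e0 False notS] .
    qed
  qed
qed

end

theorem lemma1:
  fixes l k :: nat and d :: "nat \<Rightarrow> nat"
  assumes "l \<ge> 1" and "\<forall>i<l. d i \<ge> 1" and "k \<ge> l"
  shows "\<exists>\<sigma>::strategy. \<forall>p0 A. valid_init l d k p0 \<and> valid_adversary l d A \<longrightarrow>
           legal_run k \<sigma> p0 A \<and> (\<exists>t. target_config l d k \<sigma> p0 A t)"
proof -
  interpret TG l d k using assms by unfold_locales auto
  have "\<forall>p0 A. valid_init l d k p0 \<and> valid_adversary l d A \<longrightarrow>
           legal_run k (strat l d k fs) p0 A \<and> (\<exists>t. target_config l d k (strat l d k fs) p0 A t)"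
    by (rule reduction) (use exist assms(2) in auto)
  then show ?thesis by blast
qed


end
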